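(* Let $\mathcal X$ be a locally finite CAT(0) cube complex with hyperclosure $\mathfrak F$, and let $F\subseteq\mathcal X$ be a convex subcomplex. Then $F\in\mathfrak F$ if and only if there exist a compact convex subcomplex $C$ and a $0$-cube $c\in C$ such that $F$ equals the orthogonal complement of $C$ at $c$.
   Context: Combinatorial hyperplanes: for a hyperplane $H$ with carrier $\mathcal N(H)\cong H\times[-\tfrac12,\tfrac12]$, the images of $H\times\{\pm\tfrac12\}$. For convex $Y$, the gate map $\mathfrak g_Y$ sends each $0$-cube to the unique closest $0$-cube of $Y$, extended cubically. Two convex subcomplexes are parallel if exactly the same hyperplanes intersect them. The hyperclosure $\mathfrak F$ is the smallest set of convex subcomplexes containing $\mathcal X$ and every combinatorial hyperplane, closed under $(F,F')\mapsto\mathfrak g_F(F')$ and under parallelism. Orthogonal complement: for a convex subcomplex $A$, let $P_A$ be the convex hull of the union of all convex subcomplexes parallel to $A$; then there is a CAT(0) cube complex $A^\perp$ and a cubical isometric embedding $\phi_A:A\times A^\perp\to\mathcal X$ with image $P_A$ such that $\phi_A(A\times\{t\})$ are the parallel copies of $A$ and $\phi_A(A\times\{t_0\})=A$. For a $0$-cube $a\in A$, the orthogonal complement of $A$ at $a$ is $\phi_A(\{a\}\times A^\perp)$. *)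

theory Defs
  imports Main
begin

text \<open>A CAT(0) cube complex is modelled by its 1-skeleton, a median graph
(Chepoi / Roller / Gerasimov).  Convex subcomplexes are modelled by their (nonempty,
geodesically convex) sets of 0-cubes.\<close>

definition gdist :: "('a \<Rightarrow> 'a \<Rightarrow> bool) \<Rightarrow> 'a \<Rightarrow> 'a \<Rightarrow> nat" where
  "gdist E x y = (LEAST n. (E ^^ n) x y)"

definition interval :: "('a \<Rightarrow> 'a \<Rightarrow> bool) \<Rightarrow> 'a \<Rightarrow> 'a \<Rightarrow> 'a set" where
  "interval E x y = {z. gdist E x z + gdist E z y = gdist E x y}"

definition median_graph :: "('a \<Rightarrow> 'a \<Rightarrow> bool) \<Rightarrow> bool" where
  "median_graph E \<longleftrightarrow>
     (\<forall>x y. E x y \<longrightarrow> E y x) \<and> (\<forall>x. \<not> E x x) \<and> (\<forall>x y. E\<^sup>*\<^sup>* x y) \<and>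
     (\<forall>x y z. \<exists>!m. m \<in> interval E x y \<inter> interval E y z \<inter> interval E x z)"

definition cat0_cube_complex :: "('a \<Rightarrow> 'a \<Rightarrow> bool) \<Rightarrow> bool" where
  "cat0_cube_complex E \<longleftrightarrow> median_graph E"

definition locally_finite :: "('a \<Rightarrow> 'a \<Rightarrow> bool) \<Rightarrow> bool" where
  "locally_finite E \<longleftrightarrow> (\<forall>x. finite {y. E x y})"

definition geod_closed :: "('a \<Rightarrow> 'a \<Rightarrow> bool) \<Rightarrow> 'a set \<Rightarrow> bool" where
  "geod_closed E Y \<longleftrightarrow> (\<forall>x\<in>Y. \<forall>y\<in>Y. interval E x y \<subseteq> Y)"

definition convex_sub :: "('a \<Rightarrow> 'a \<Rightarrow> bool) \<Rightarrow> 'a set \<Rightarrow> bool" where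
  "convex_sub E Y \<longleftrightarrow> Y \<noteq> {} \<and> geod_closed E Y"

definition convex_hull_sub :: "('a \<Rightarrow> 'a \<Rightarrow> bool) \<Rightarrow> 'a set \<Rightarrow> 'a set" where
  "convex_hull_sub E S = \<Inter>{C. geod_closed E C \<and> S \<subseteq> C}"

text \<open>Djokovic-Winkler relation on (oriented) edges; its classes are the hyperplanes.\<close>
definition theta :: "('a \<Rightarrow> 'a \<Rightarrow> bool) \<Rightarrow> 'a \<times> 'a \<Rightarrow> 'a \<times> 'a \<Rightarrow> bool" where
  "theta E e f \<longleftrightarrow>
     gdist E (fst e) (fst f) + gdist E (snd e) (snd f) \<noteq>
     gdist E (fst e) (snd f) + gdist E (snd e) (fst f)"

text \<open>The hyperplane dual to the edge (u,v): the set of (oriented) edges it crosses.\<close>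
definition hyperplane_of :: "('a \<Rightarrow> 'a \<Rightarrow> bool) \<Rightarrow> 'a \<Rightarrow> 'a \<Rightarrow> ('a \<times> 'a) set" where
  "hyperplane_of E u v = {f. E (fst f) (snd f) \<and> theta E (u, v) f}"

definition hyperplanes :: "('a \<Rightarrow> 'a \<Rightarrow> bool) \<Rightarrow> ('a \<times> 'a) set set" where
  "hyperplanes E = {hyperplane_of E u v | u v. E u v}"

text \<open>Hyperplane H intersects the convex subcomplex Y iff it crosses an edge of Y.\<close>
definition crosses :: "('a \<times> 'a) set \<Rightarrow> 'a set \<Rightarrow> bool" where
  "crosses H Y \<longleftrightarrow> (\<exists>f\<in>H. fst f \<in> Y \<and> snd f \<in> Y)"

definition parallel :: "('a \<Rightarrow> 'a \<Rightarrow> bool) \<Rightarrow> 'a set \<Rightarrow> 'a set \<Rightarrow> bool" where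
  "parallel E Y Z \<longleftrightarrow> (\<forall>H\<in>hyperplanes E. crosses H Y \<longleftrightarrow> crosses H Z)"

text \<open>Combinatorial hyperplane: the 0-cubes of the side of the carrier of the
hyperplane dual to (u,v) lying in the halfspace containing u.\<close>
definition comb_hyperplane :: "('a \<Rightarrow> 'a \<Rightarrow> bool) \<Rightarrow> 'a \<Rightarrow> 'a \<Rightarrow> 'a set" where
  "comb_hyperplane E u v =
     {x. (\<exists>y. (x, y) \<in> hyperplane_of E u v) \<and> gdist E x u < gdist E x v}"

definition comb_hyperplanes :: "('a \<Rightarrow> 'a \<Rightarrow> bool) \<Rightarrow> 'a set set" where
  "comb_hyperplanes E = {comb_hyperplane E u v | u v. E u v}"

definition gate :: "('a \<Rightarrow> 'a \<Rightarrow> bool) \<Rightarrow> 'a set \<Rightarrow> 'a \<Rightarrow> 'a" where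
  "gate E Y x = (THE y. y \<in> Y \<and> (\<forall>z\<in>Y. z \<noteq> y \<longrightarrow> gdist E x y < gdist E x z))"

inductive_set hyperclosure :: "('a \<Rightarrow> 'a \<Rightarrow> bool) \<Rightarrow> 'a set set"
  for E :: "'a \<Rightarrow> 'a \<Rightarrow> bool" where
  whole: "UNIV \<in> hyperclosure E"
| combhyp: "Y \<in> comb_hyperplanes E \<Longrightarrow> Y \<in> hyperclosure E"
| gate_img: "F \<in> hyperclosure E \<Longrightarrow> F' \<in> hyperclosure E \<Longrightarrow> gate E F ` F' \<in> hyperclosure E"
| par: "F \<in> hyperclosure E \<Longrightarrow> convex_sub E G \<Longrightarrow> parallel E F G \<Longrightarrow> G \<in> hyperclosure E"

definition parallel_hull :: "('a \<Rightarrow> 'a \<Rightarrow> bool) \<Rightarrow> 'a set \<Rightarrow> 'a set" where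
  "parallel_hull E A = convex_hull_sub E (\<Union>{B. convex_sub E B \<and> parallel E A B})"

text \<open>Orthogonal complement of A at a: phi_A({a} x A^perp) inside P_A = A x A^perp,
i.e. the fibre over a of the projection of P_A to the A-factor (= gate map to A).\<close>
definition orth_compl :: "('a \<Rightarrow> 'a \<Rightarrow> bool) \<Rightarrow> 'a set \<Rightarrow> 'a \<Rightarrow> 'a set" where
  "orth_compl E A a = {x \<in> parallel_hull E A. gate E A x = a}"

end

theory Submission
  imports Defs
begin

locale mg =
  fixes E :: "'a \<Rightarrow> 'a \<Rightarrow> bool"
  assumes mg: "median_graph E"
begin

abbreviation d where "d \<equiv> gdist E"
abbreviation I where "I \<equiv> interval E"

lemma E_sym: "E x y \<Longrightarrow> E y x" using mg unfolding median_graph_def by blast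
lemma E_irr: "\<not> E x x" using mg unfolding median_graph_def by blast
lemma E_conn: "\<exists>n. (E ^^ n) x y"
  using mg unfolding median_graph_def by (blast intro: rtranclp_imp_relpowp)

lemma d_spec: "(E ^^ d x y) x y"
  unfolding gdist_def using E_conn by (rule LeastI_ex)

lemma d_le: "(E ^^ n) x y \<Longrightarrow> d x y \<le> n"
  unfolding gdist_def by (rule Least_le)

lemma d_refl[simp]: "d x x = 0"
  using d_le[of 0 x x] by simp

lemma d_zero: "d x y = 0 \<Longrightarrow> x = y"
  using d_spec[of x y] by simp

lemma d_zero_iff[simp]: "d x y = 0 \<longleftrightarrow> x = y"
  using d_zero by auto

lemma relpow_sym: "(E ^^ n) x y \<Longrightarrow> (E ^^ n) y x"
proof (induction n arbitrary: y)
  case 0 then show ?case by simp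
next
  case (Suc n)
  from Suc.prems obtain z where "(E ^^ n) x z" "E z y" by (auto elim: relpowp_Suc_E)
  then have "(E ^^ n) z x" "E y z" using Suc.IH E_sym by auto
  then show ?case by (meson relpowp_Suc_I2)
qed

lemma d_sym: "d x y = d y x"
  using d_le[OF relpow_sym[OF d_spec[of x y]]] d_le[OF relpow_sym[OF d_spec[of y x]]] by simp

lemma d_tri: "d x z \<le> d x y + d y z"
  using d_le[OF relpowp_trans[OF d_spec[of x y] d_spec[of y z]]] .

lemma d_edge: "E x y \<Longrightarrow> d x y = 1"
proof -
  assume "E x y"
  then have "d x y \<le> 1" using d_le[of 1 x y] by (metis relpowp_1)
  moreover have "x \<noteq> y" using \<open>E x y\<close> E_irr by auto
  ultimately show ?thesis by (cases "d x y") auto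
qed

lemma d_one: "d x y = 1 \<Longrightarrow> E x y"
  using d_spec[of x y] by (metis relpowp_1)

lemma d_step: "d x z = Suc n \<Longrightarrow> \<exists>y. E x y \<and> d y z = n"
proof -
  assume a: "d x z = Suc n"
  obtain y where y: "E x y" "(E ^^ n) y z"
    using relpowp_Suc_D2[OF d_spec[of x z, unfolded a]] by blast
  have "d y z \<le> n" using y(2) by (rule d_le)
  moreover have "d x z \<le> d x y + d y z" by (rule d_tri)
  ultimately show ?thesis using y d_edge[OF y(1)] a by (intro exI[of _ y]) auto
qed

lemma d_adj: "E x y \<Longrightarrow> d x z \<le> Suc (d y z)"
  using d_tri[of x z y] d_edge by simp

lemma I_def': "z \<in> I x y \<longleftrightarrow> d x z + d z y = d x y"
  unfolding interval_def by simp

lemma I_sym: "I x y = I y x"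
  unfolding interval_def using d_sym by (auto simp: add.commute)

lemma I_left[simp]: "x \<in> I x y" by (simp add: I_def')
lemma I_right[simp]: "y \<in> I x y" by (simp add: I_def')

lemma I_self: "I x x = {x}"
proof -
  have "z \<in> I x x \<Longrightarrow> z = x" for z
    unfolding I_def' by (metis add_is_0 d_refl d_zero)
  then show ?thesis by auto
qed

lemma med_ex1: "\<exists>!m. m \<in> I x y \<inter> I y z \<inter> I x z"
  using mg unfolding median_graph_def by blast

definition med where "med x y z = (THE m. m \<in> I x y \<inter> I y z \<inter> I x z)"

lemma med_in: "med x y z \<in> I x y" "med x y z \<in> I y z" "med x y z \<in> I x z"
  using theI'[OF med_ex1[of x y z]] unfolding med_def by auto

lemma med_unique: "m \<in> I x y \<Longrightarrow> m \<in> I y z \<Longrightarrow> m \<in> I x z \<Longrightarrow> m = med x y z"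
proof -
  assume "m \<in> I x y" "m \<in> I y z" "m \<in> I x z"
  then have 1: "m \<in> I x y \<inter> I y z \<inter> I x z" by blast
  have 2: "med x y z \<in> I x y \<inter> I y z \<inter> I x z" using med_in by blast
  obtain m0 where "m0 \<in> I x y \<inter> I y z \<inter> I x z" "\<forall>y'. y' \<in> I x y \<inter> I y z \<inter> I x z \<longrightarrow> y' = m0"
    using med_ex1[of x y z] unfolding Ex1_def by blast
  then show ?thesis using 1 2 by metis
qed

lemma I_edge: "E a b \<Longrightarrow> I a b = {a, b}"
proof -
  assume e: "E a b"
  have "z \<in> I a b \<Longrightarrow> z = a \<or> z = b" for z
  proof -
    assume "z \<in> I a b"
    then have "d a z + d z b = 1" using d_edge[OF e] by (simp add: I_def')
    then have "d a z = 0 \<or> d z b = 0" by arith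
    then show ?thesis by auto
  qed
  then show ?thesis by auto
qed

lemma bip: "E a b \<Longrightarrow> d z a \<noteq> d z b"
proof
  assume e: "E a b" and eq: "d z a = d z b"
  let ?m = "med a b z"
  have "?m \<in> I a b" by (rule med_in)
  then have "?m = a \<or> ?m = b" using I_edge[OF e] by auto
  then show False
  proof
    assume "?m = a"
    then have "a \<in> I b z" using med_in by metis
    then have "d b a + d a z = d b z" by (simp add: I_def')
    then show False using eq d_edge[OF e] d_sym[of b a] d_sym[of a z] d_sym[of b z] by linarith
  next
    assume "?m = b"
    then have "b \<in> I a z" using med_in by metis
    then have "d a b + d b z = d a z" by (simp add: I_def')
    then show False using eq d_edge[OF e] d_sym[of b z] d_sym[of a z] by linarith
  qed
qed

lemma d_adj2: "E a b \<Longrightarrow> d z a \<le> Suc (d z b)"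
  using d_tri[of z a b] d_edge[of b a] E_sym[of a b] d_sym[of a b] by simp

lemma bip2: "E a b \<Longrightarrow> d z b = Suc (d z a) \<or> d z a = Suc (d z b)"
proof -
  assume e: "E a b"
  have "d z a \<le> Suc (d z b)" "d z b \<le> Suc (d z a)" "d z a \<noteq> d z b"
    using d_adj2[OF e] d_adj2[OF E_sym[OF e]] bip[OF e] by auto
  then show ?thesis by arith
qed


lemma adj_le: "E x x' \<Longrightarrow> d x' w \<le> Suc (d x w) \<and> d x w \<le> Suc (d x' w)"
  using d_adj[of x x' w] d_adj[of x' x w] E_sym by auto

lemma step_toward:
  assumes "x \<noteq> z"
  shows "\<exists>x'. E x x' \<and> d x' z + 1 = d x z"
proof -
  obtain n where "d x z = Suc n" using assms by (cases "d x z") auto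
  then show ?thesis using d_step by fastforce
qed

definition W where "W a b = {z. d z a < d z b}"

lemma W_compl: "E a b \<Longrightarrow> z \<notin> W a b \<longleftrightarrow> z \<in> W b a"
  unfolding W_def using bip2[of a b z] by auto

lemma W_dist: "E a b \<Longrightarrow> z \<in> W a b \<Longrightarrow> d z b = Suc (d z a)"
  unfolding W_def using bip2[of a b z] by auto

lemma W_convex_aux:
  "\<forall>a b x y z. d x y = n \<longrightarrow> E a b \<longrightarrow> x \<in> W a b \<longrightarrow> y \<in> W a b \<longrightarrow> z \<in> I x y \<longrightarrow> z \<in> W a b"
proof (induction n rule: less_induct)
  case (less n)
  show ?case
  proof (intro allI impI)
    fix a b x y z
    assume dn: "d x y = n" and e: "E a b" and x: "x \<in> W a b" and y: "y \<in> W a b" and z: "z \<in> I x y"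
    show "z \<in> W a b"
    proof (rule ccontr)
      assume zn: "z \<notin> W a b"
      then have zx: "z \<noteq> x" "z \<noteq> y" using x y by auto
      have zI: "d x z + d z y = n" using z dn by (simp add: I_def')
      obtain x' where x': "E x x'" "d x' z + 1 = d x z" using step_toward[of x z] zx by auto
      obtain y' where y': "E y y'" "d y' z + 1 = d y z" using step_toward[of y z] zx by auto
      have dzy': "d z y' = d y' z" "d z y = d y z" using d_sym by auto
      have ax1: "d x y \<le> d x x' + d x' y" "d x' y \<le> d x' z + d z y" by (rule d_tri)+
      have ax2: "d x y \<le> d x y' + d y' y" "d x y' \<le> d x z + d z y'" by (rule d_tri)+
      have ax3: "d x' y \<le> d x' y' + d y' y" by (rule d_tri)
      have ax4: "d x' y' \<le> d x' z + d z y'" by (rule d_tri)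
      have ee: "d x x' = 1" "d y' y = 1" "d y y' = 1" using d_edge x'(1) y'(1) E_sym by auto
      have n2: "n \<ge> 2" using zI zx by (cases "d x z"; cases "d z y") auto
      have dx'y: "d x' y = n - 1" using ax1 ee x' zI dzy' dn by linarith
      have zx'y: "z \<in> I x' y" unfolding I_def' using ax1 ee x' zI dzy' dn dx'y by linarith
      have dxy': "d x y' = n - 1" using ax2 ee y' zI dzy' dn by linarith
      have zxy': "z \<in> I x y'" unfolding I_def' using ax2 ee y' zI dzy' dn dxy' by linarith
      have dx'y': "d x' y' = n - 2" using ax1 ax3 ax4 ee x' y' zI dzy' dx'y dn by linarith
      have x'W: "x' \<in> W b a"
      proof -
        have "x' \<notin> W a b"
        proof
          assume "x' \<in> W a b"
          then have "z \<in> W a b" using less.IH[of "n - 1"] n2 dx'y e y zx'y by auto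
          then show False using zn by simp
        qed
        then show ?thesis using W_compl[OF e] by simp
      qed
      have y'W: "y' \<in> W b a"
      proof -
        have "y' \<notin> W a b"
        proof
          assume "y' \<in> W a b"
          then have "z \<in> W a b" using less.IH[of "n - 1"] n2 dxy' e x zxy' by auto
          then show False using zn by simp
        qed
        then show ?thesis using W_compl[OF e] by simp
      qed
      have e': "E b a" using e E_sym by simp
      define m2 where "m2 = med x' y' a"
      define m where "m = med x y a"
      have m2W: "m2 \<in> W b a"
        using less.IH[of "n - 2"] n2 dx'y' e' x'W y'W med_in(1)[of x' y' a] unfolding m2_def by auto
      have m2d: "d m2 a = Suc (d m2 b)" using W_dist[OF e' m2W] .
      have m2I: "d x' m2 + d m2 y' = d x' y'" "d y' m2 + d m2 a = d y' a" "d x' m2 + d m2 a = d x' a"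
        using med_in[of x' y' a] unfolding m2_def I_def' by auto
      have mI: "d x m + d m y = d x y" "d y m + d m a = d y a" "d x m + d m a = d x a"
        using med_in[of x y a] unfolding m_def I_def' by auto
      have xd: "d x b = Suc (d x a)" "d y b = Suc (d y a)" using W_dist[OF e] x y by auto
      have x'd: "d x' a = Suc (d x' b)" "d y' a = Suc (d y' b)" using W_dist[OF e'] x'W y'W by auto
      have adj: "d x' a \<le> Suc (d x a)" "d x a \<le> Suc (d x' a)" "d x' b \<le> Suc (d x b)" "d x b \<le> Suc (d x' b)"
                "d y' a \<le> Suc (d y a)" "d y a \<le> Suc (d y' a)" "d y' b \<le> Suc (d y b)" "d y b \<le> Suc (d y' b)"
                "d x m2 \<le> Suc (d x' m2)" "d y m2 \<le> Suc (d y' m2)"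
        using adj_le[OF x'(1)] adj_le[OF y'(1)] by auto
      have sy: "d m2 y' = d y' m2" "d m y = d y m" "d m b = d b m" "d m2 b = d b m2" using d_sym by auto
      have mb: "d m b \<le> Suc (d m a)" using d_adj2[OF e'] .
      have tri: "d x b \<le> d x m + d m b" "d y b \<le> d y m + d m b"
                "d x b \<le> d x m2 + d m2 b" "d y b \<le> d y m2 + d m2 b"
                "d x y \<le> d x m2 + d m2 y" by (rule d_tri)+
      have sy2: "d m2 y = d y m2" using d_sym by auto
      have "m \<in> I x b" "m \<in> I y b" unfolding I_def' using mI xd mb tri by linarith+
      moreover have "m \<in> I x y" using mI(1) unfolding I_def' .
      ultimately have mm: "m = med x y b" using med_unique[of m x y b] I_sym[of y b] by blast
      have "m2 \<in> I x b" "m2 \<in> I y b" unfolding I_def' using m2d m2I xd x'd adj tri sy by linarith+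
      moreover have "m2 \<in> I x y"
      proof -
        have x'a: "d x' a = Suc (d x a)" using x'd xd adj by linarith
        have y'a: "d y' a = Suc (d y a)" using x'd xd adj by linarith
        have s1: "2 * d m2 a + d x' y' = d x' a + d y' a" using m2I sy by linarith
        have s2: "d x m2 + d m2 b = d x b" "d y m2 + d m2 b = d y b"
          using \<open>m2 \<in> I x b\<close> \<open>m2 \<in> I y b\<close> unfolding I_def' by auto
        have s3: "d x' y' + 2 = n" using dx'y' n2 by linarith
        have "d x m2 + d y m2 = n" using s1 s2 s3 x'a y'a xd m2d by linarith
        then show ?thesis unfolding I_def' using sy2 dn by linarith
      qed
      ultimately have "m2 = med x y b" using med_unique[of m2 x y b] I_sym[of y b] by blast
      then have "m = m2" using mm by simp
      moreover have "d m a \<noteq> d m2 a"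
      proof -
        have x'a: "d x' a = Suc (d x a)" using x'd xd adj by linarith
        have y'a: "d y' a = Suc (d y a)" using x'd xd adj by linarith
        have s1: "2 * d m2 a + d x' y' = d x' a + d y' a" using m2I sy by linarith
        have s3: "d x' y' + 2 = n" using dx'y' n2 by linarith
        have s4: "2 * d m a + n = d x a + d y a" using mI sy dn by linarith
        show ?thesis using s1 s3 s4 x'a y'a by linarith
      qed
      ultimately show False by simp
    qed
  qed
qed

lemma W_convex: "E a b \<Longrightarrow> x \<in> W a b \<Longrightarrow> y \<in> W a b \<Longrightarrow> z \<in> I x y \<Longrightarrow> z \<in> W a b"
  using W_convex_aux by blast


lemma W_self: "E a b \<Longrightarrow> a \<in> W a b" unfolding W_def using d_edge by simp
lemma W_other: "E a b \<Longrightarrow> b \<notin> W a b" unfolding W_def using d_edge d_sym by simp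

lemma W_cut_sub:
  assumes e: "E a b" and e2: "E x y" and x: "x \<in> W a b" and y: "y \<notin> W a b" and z: "z \<in> W a b"
  shows "z \<in> W x y"
proof (rule ccontr)
  assume "z \<notin> W x y"
  then have "z \<in> W y x" using W_compl[OF e2] by simp
  then have "d z x = Suc (d z y)" using W_dist[OF E_sym[OF e2]] by simp
  then have "y \<in> I z x" unfolding I_def' using d_edge[OF E_sym[OF e2]] by simp
  then have "y \<in> W a b" using W_convex[OF e z x] by simp
  then show False using y by simp
qed

lemma W_cut:
  assumes e: "E a b" and e2: "E x y" and x: "x \<in> W a b" and y: "y \<notin> W a b"
  shows "W x y = W a b"
proof
  show "W a b \<subseteq> W x y" using W_cut_sub[OF e e2 x y] by blast
next
  have e': "E b a" and e2': "E y x" using e e2 E_sym by auto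
  have y': "y \<in> W b a" and x': "x \<notin> W b a" using W_compl[OF e] x y by auto
  show "W x y \<subseteq> W a b"
  proof
    fix z assume zz: "z \<in> W x y"
    show "z \<in> W a b"
    proof (rule ccontr)
      assume "z \<notin> W a b"
      then have "z \<in> W b a" using W_compl[OF e] by simp
      then have "z \<in> W y x" using W_cut_sub[OF e' e2' y' x'] by simp
      then show False using zz W_compl[OF e2, of z] by blast
    qed
  qed
qed

lemma theta_char:
  assumes e: "E u v" and e2: "E x y"
  shows "theta E (u, v) (x, y) \<longleftrightarrow> (x \<in> W u v \<longleftrightarrow> y \<notin> W u v)"
proof -
  have s: "d u x = d x u" "d v y = d y v" "d u y = d y u" "d v x = d x v" using d_sym by auto
  have a1: "d x v = Suc (d x u) \<or> d x u = Suc (d x v)" using bip2[OF e] by simp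
  have a2: "d y v = Suc (d y u) \<or> d y u = Suc (d y v)" using bip2[OF e] by simp
  have a3: "d x u \<le> Suc (d y u)" "d y u \<le> Suc (d x u)" "d x v \<le> Suc (d y v)" "d y v \<le> Suc (d x v)"
    using adj_le[OF e2] by auto
  show ?thesis unfolding theta_def W_def using s a1 a2 a3 by auto
qed

lemma hyp_char:
  assumes e: "E u v"
  shows "hyperplane_of E u v = {f. E (fst f) (snd f) \<and> (fst f \<in> W u v \<longleftrightarrow> snd f \<notin> W u v)}"
  unfolding hyperplane_of_def using theta_char[OF e] by auto

lemma hyp_W:
  assumes "E u v" "E x y" "W x y = W u v"
  shows "hyperplane_of E x y = hyperplane_of E u v"
  using hyp_char assms by simp

lemma hyp_swap:
  assumes e: "E u v"
  shows "hyperplane_of E v u = hyperplane_of E u v"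
  using hyp_char[OF e] hyp_char[OF E_sym[OF e]] W_compl[OF e] by auto

lemma hyp_eq:
  assumes e: "E u v" and f: "(x, y) \<in> hyperplane_of E u v"
  shows "hyperplane_of E x y = hyperplane_of E u v"
proof -
  have e2: "E x y" and c: "x \<in> W u v \<longleftrightarrow> y \<notin> W u v" using f hyp_char[OF e] by auto
  show ?thesis
  proof (cases "x \<in> W u v")
    case True
    then show ?thesis using hyp_W[OF e e2] W_cut[OF e e2 True] c by auto
  next
    case False
    have e': "E v u" using E_sym e by simp
    have "x \<in> W v u" "y \<notin> W v u" using False c W_compl[OF e] by auto
    then have "W x y = W v u" using W_cut[OF e' e2] by simp
    then show ?thesis using hyp_W[OF e' e2] hyp_swap[OF e] by simp
  qed
qed

lemma own_hyp: "E u v \<Longrightarrow> (u, v) \<in> hyperplane_of E u v"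
  using hyp_char W_self W_other by auto

definition rep where "rep H = (SOME p. E (fst p) (snd p) \<and> H = hyperplane_of E (fst p) (snd p))"
definition hs where "hs H = W (fst (rep H)) (snd (rep H))"
definition sepp where "sepp H a b \<longleftrightarrow> (a \<in> hs H \<longleftrightarrow> b \<notin> hs H)"
abbreviation HP where "HP \<equiv> hyperplanes E"

lemma HP_iff: "H \<in> HP \<longleftrightarrow> (\<exists>u v. E u v \<and> H = hyperplane_of E u v)"
  unfolding hyperplanes_def by auto

lemma hyp_in_HP: "E u v \<Longrightarrow> hyperplane_of E u v \<in> HP"
  unfolding hyperplanes_def by auto

lemma hs_cases:
  assumes e: "E u v"
  shows "hs (hyperplane_of E u v) = W u v \<or> hs (hyperplane_of E u v) = W v u"
proof -
  let ?H = "hyperplane_of E u v"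
  have "\<exists>p. E (fst p) (snd p) \<and> ?H = hyperplane_of E (fst p) (snd p)" using e by auto
  then have p: "E (fst (rep ?H)) (snd (rep ?H))" "?H = hyperplane_of E (fst (rep ?H)) (snd (rep ?H))"
    unfolding rep_def by (metis (mono_tags, lifting) someI_ex)+
  obtain p1 p2 where pp: "rep ?H = (p1, p2)" by (cases "rep ?H")
  have e2: "E p1 p2" and hh: "?H = hyperplane_of E p1 p2" using p pp by auto
  have "(p1, p2) \<in> ?H" using own_hyp[OF e2] hh by simp
  then have c: "p1 \<in> W u v \<longleftrightarrow> p2 \<notin> W u v" using hyp_char[OF e] by auto
  show ?thesis
  proof (cases "p1 \<in> W u v")
    case True
    then have "W p1 p2 = W u v" using W_cut[OF e e2] c by auto
    then show ?thesis unfolding hs_def pp by simp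
  next
    case False
    have e': "E v u" using E_sym e by simp
    have "p1 \<in> W v u" "p2 \<notin> W v u" using False c W_compl[OF e] by auto
    then have "W p1 p2 = W v u" using W_cut[OF e' e2] by simp
    then show ?thesis unfolding hs_def pp by simp
  qed
qed

lemma sepp_hyp:
  assumes e: "E u v"
  shows "sepp (hyperplane_of E u v) a b \<longleftrightarrow> (a \<in> W u v \<longleftrightarrow> b \<notin> W u v)"
  using hs_cases[OF e] W_compl[OF e] unfolding sepp_def by auto

lemma sepp_xor: "sepp H a c \<longleftrightarrow> (sepp H a b \<longleftrightarrow> \<not> sepp H b c)"
  unfolding sepp_def by auto

lemma sepp_sym: "sepp H a b \<longleftrightarrow> sepp H b a"
  unfolding sepp_def by auto

lemma sepp_refl[simp]: "\<not> sepp H a a"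
  unfolding sepp_def by auto

definition sep where "sep a b = {H \<in> HP. sepp H a b}"

lemma sep_sym: "sep a b = sep b a"
  unfolding sep_def using sepp_sym by auto

lemma sep_self[simp]: "sep a a = {}"
  unfolding sep_def by auto

lemma sep_HP: "sep a b \<subseteq> HP" unfolding sep_def by auto

lemma sep_xor: "H \<in> sep a c \<longleftrightarrow> H \<in> HP \<and> (H \<in> sep a b \<longleftrightarrow> H \<notin> sep b c)"
  unfolding sep_def using sepp_xor by auto

lemma sep_edge:
  assumes e: "E a b"
  shows "sep a b = {hyperplane_of E a b}"
proof
  show "{hyperplane_of E a b} \<subseteq> sep a b"
    unfolding sep_def using hyp_in_HP[OF e] sepp_hyp[OF e] W_self[OF e] W_other[OF e] by auto
next
  show "sep a b \<subseteq> {hyperplane_of E a b}"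
  proof
    fix H assume "H \<in> sep a b"
    then obtain u v where uv: "E u v" "H = hyperplane_of E u v" and s: "sepp H a b"
      unfolding sep_def HP_iff by auto
    then have "(a, b) \<in> hyperplane_of E u v" using sepp_hyp[OF uv(1)] hyp_char[OF uv(1)] e by auto
    then show "H \<in> {hyperplane_of E a b}" using hyp_eq[OF uv(1)] uv by simp
  qed
qed

lemma sep_card_aux: "\<forall>a. d a b = n \<longrightarrow> finite (sep a b) \<and> card (sep a b) = n"
proof (induction n)
  case 0 then show ?case by simp
next
  case (Suc n)
  show ?case
  proof (intro allI impI)
    fix a assume dn: "d a b = Suc n"
    obtain a' where a': "E a a'" "d a' b = n" using d_step[OF dn] by auto
    have ih: "finite (sep a' b)" "card (sep a' b) = n" using Suc.IH a'(2) by auto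
    let ?h = "hyperplane_of E a a'"
    have nin: "?h \<notin> sep a' b"
    proof
      assume "?h \<in> sep a' b"
      then have "sepp ?h a' b" unfolding sep_def by auto
      then have "b \<in> W a a'" using sepp_hyp[OF a'(1)] W_other[OF a'(1)] by auto
      moreover have "a' \<in> I a b" unfolding I_def' using dn a' d_edge by simp
      ultimately have "a' \<in> W a a'" using W_convex[OF a'(1) W_self[OF a'(1)]] by simp
      then show False using W_other[OF a'(1)] by simp
    qed
    have "sep a b = insert ?h (sep a' b)"
    proof
      show "sep a b \<subseteq> insert ?h (sep a' b)"
      proof
        fix H assume H: "H \<in> sep a b"
        have "H \<in> sep a a' \<longleftrightarrow> H \<notin> sep a' b" using sep_xor[of H a b a'] H by blast
        then show "H \<in> insert ?h (sep a' b)" using sep_edge[OF a'(1)] by auto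
      qed
      show "insert ?h (sep a' b) \<subseteq> sep a b"
      proof
        fix H assume H: "H \<in> insert ?h (sep a' b)"
        then have hp: "H \<in> HP" using hyp_in_HP[OF a'(1)] sep_HP by auto
        have "H \<in> sep a a' \<longleftrightarrow> H \<notin> sep a' b" using H nin sep_edge[OF a'(1)] by auto
        then show "H \<in> sep a b" using sep_xor[of H a b a'] hp by blast
      qed
    qed
    then show "finite (sep a b) \<and> card (sep a b) = Suc n" using ih nin by simp
  qed
qed

lemma sep_finite: "finite (sep a b)" using sep_card_aux by blast
lemma d_card: "d a b = card (sep a b)" using sep_card_aux by metis

lemma sep_empty_iff: "sep a b = {} \<longleftrightarrow> a = b"
  using d_card[of a b] sep_finite[of a b] by auto

lemma sep_symdiff: "sep x y = (sep x z - sep z y) \<union> (sep z y - sep x z)"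
  using sep_xor[of _ x y z] sep_HP by blast

lemma card_symdiff:
  assumes "finite A" "finite B"
  shows "card ((A - B) \<union> (B - A)) + 2 * card (A \<inter> B) = card A + card B"
proof -
  have "card ((A - B) \<union> (B - A)) = card (A - B) + card (B - A)"
    using assms by (subst card_Un_disjoint) auto
  moreover have "card A = card (A - B) + card (A \<inter> B)"
    using card_Int_Diff[OF assms(1), of B] by simp
  moreover have "card B = card (B - A) + card (A \<inter> B)"
    using card_Int_Diff[OF assms(2), of A] by (simp add: Int_commute)
  ultimately show ?thesis by simp
qed

lemma I_sep: "z \<in> I x y \<longleftrightarrow> sep x z \<inter> sep z y = {}"
proof -
  have "d x y + 2 * card (sep x z \<inter> sep z y) = d x z + d z y"
    using card_symdiff[OF sep_finite sep_finite, of x z z y] sep_symdiff[of x y z] d_card by simp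
  moreover have fin: "finite (sep x z \<inter> sep z y)" using sep_finite by blast
  ultimately show ?thesis unfolding I_def'
  proof -
    assume eq: "d x y + 2 * card (sep x z \<inter> sep z y) = d x z + d z y"
    show "(d x z + d z y = d x y) = (sep x z \<inter> sep z y = {})"
    proof
      assume "d x z + d z y = d x y"
      then have "card (sep x z \<inter> sep z y) = 0" using eq by linarith
      then show "sep x z \<inter> sep z y = {}" using fin by simp
    next
      assume "sep x z \<inter> sep z y = {}"
      then show "d x z + d z y = d x y" using eq by simp
    qed
  qed
qed

lemma I_sepp: "z \<in> I x y \<longleftrightarrow> (\<forall>H\<in>HP. \<not> (sepp H x z \<and> sepp H z y))"
  unfolding I_sep sep_def by auto

lemma I_sep_union: "z \<in> I x y \<Longrightarrow> sep x y = sep x z \<union> sep z y"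
  using I_sep sep_symdiff[of x y z] by blast

lemma sep_tri: "sep x y \<subseteq> sep x z \<union> sep z y"
  using sep_symdiff[of x y z] by blast

definition hsx where "hsx H x = {z. \<not> sepp H x z}"

lemma gc_def': "geod_closed E Y \<longleftrightarrow> (\<forall>x\<in>Y. \<forall>y\<in>Y. I x y \<subseteq> Y)"
  unfolding geod_closed_def by simp

lemma hsx_gc: "H \<in> HP \<Longrightarrow> geod_closed E (hsx H x)"
  unfolding gc_def' hsx_def using I_sepp sepp_xor by blast

lemma hsx_self[simp]: "x \<in> hsx H x" unfolding hsx_def by simp


lemma gc_Int: "geod_closed E A \<Longrightarrow> geod_closed E B \<Longrightarrow> geod_closed E (A \<inter> B)"
  unfolding gc_def' by blast

lemma gc_I: "geod_closed E (I x y)"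
  unfolding gc_def'
proof (intro ballI subsetI)
  fix z1 z2 w assume z1: "z1 \<in> I x y" and z2: "z2 \<in> I x y" and w: "w \<in> I z1 z2"
  show "w \<in> I x y" unfolding I_sepp
  proof (intro ballI notI)
    fix H assume H: "H \<in> HP" and s: "sepp H x w \<and> sepp H w y"
    have "\<not> (sepp H x z1 \<and> sepp H z1 y)" "\<not> (sepp H x z2 \<and> sepp H z2 y)" "\<not> (sepp H z1 w \<and> sepp H w z2)"
      using z1 z2 w H unfolding I_sepp by auto
    then show False using s unfolding sepp_def by blast
  qed
qed

lemma gate_ex:
  assumes Y: "convex_sub E Y"
  shows "\<exists>g\<in>Y. \<forall>z\<in>Y. g \<in> I x z"
proof -
  obtain y0 where "y0 \<in> Y" using Y unfolding convex_sub_def by auto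
  then obtain g where g: "g \<in> Y" "\<forall>z. z \<in> Y \<longrightarrow> d x g \<le> d x z"
    using ex_has_least_nat[of "\<lambda>z. z \<in> Y" y0 "d x"] by blast
  have "g \<in> I x z" if z: "z \<in> Y" for z
  proof -
    let ?m = "med x g z"
    have "?m \<in> I g z" using med_in by blast
    then have "?m \<in> Y" using Y g(1) z unfolding convex_sub_def gc_def' by blast
    then have "d x g \<le> d x ?m" using g by blast
    moreover have "d x ?m + d ?m g = d x g" using med_in(1)[of x g z] unfolding I_def' .
    ultimately have "d ?m g = 0" by linarith
    then have "?m = g" by simp
    then show ?thesis using med_in(3)[of x g z] by simp
  qed
  then show ?thesis using g by blast
qed

lemma gate_char:
  assumes Y: "convex_sub E Y" and g: "g \<in> Y" and gI: "\<forall>z\<in>Y. g \<in> I x z"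
  shows "gate E Y x = g"
proof -
  have P: "g \<in> Y \<and> (\<forall>z\<in>Y. z \<noteq> g \<longrightarrow> d x g < d x z)"
  proof (intro conjI ballI impI)
    fix z assume "z \<in> Y" "z \<noteq> g"
    then have "d x g + d g z = d x z" "d g z \<noteq> 0" using gI unfolding I_def' by auto
    then show "d x g < d x z" by linarith
  qed (rule g)
  show ?thesis unfolding gate_def
  proof (rule the_equality)
    show "g \<in> Y \<and> (\<forall>z\<in>Y. z \<noteq> g \<longrightarrow> d x g < d x z)" by (rule P)
  next
    fix y assume "y \<in> Y \<and> (\<forall>z\<in>Y. z \<noteq> y \<longrightarrow> d x y < d x z)"
    then show "y = g" using P by (metis less_asym)
  qed
qed

lemma gate_props:
  assumes Y: "convex_sub E Y"
  shows "gate E Y x \<in> Y" "\<And>z. z \<in> Y \<Longrightarrow> gate E Y x \<in> I x z"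
  using gate_ex[OF Y, of x] gate_char[OF Y] by metis+

lemma gate_id: "convex_sub E Y \<Longrightarrow> x \<in> Y \<Longrightarrow> gate E Y x = x"
  by (rule gate_char) auto

lemma gate_sepp:
  assumes Y: "convex_sub E Y" and H: "H \<in> HP"
  shows "sepp H x (gate E Y x) \<longleftrightarrow> (\<forall>z\<in>Y. sepp H x z)"
proof
  assume s: "sepp H x (gate E Y x)"
  show "\<forall>z\<in>Y. sepp H x z"
  proof
    fix z assume "z \<in> Y"
    then have "\<not> (sepp H x (gate E Y x) \<and> sepp H (gate E Y x) z)"
      using gate_props(2)[OF Y] H unfolding I_sepp by blast
    then show "sepp H x z" using s sepp_xor by blast
  qed
next
  assume "\<forall>z\<in>Y. sepp H x z"
  then show "sepp H x (gate E Y x)" using gate_props(1)[OF Y] by blast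
qed

lemma gate_sep:
  assumes Y: "convex_sub E Y"
  shows "H \<in> sep x (gate E Y x) \<longleftrightarrow> H \<in> HP \<and> (\<forall>z\<in>Y. sepp H x z)"
  using gate_sepp[OF Y] unfolding sep_def by auto

lemma cross_edge_aux:
  "\<forall>a b. d a b = n \<longrightarrow> geod_closed E Y \<longrightarrow> a \<in> Y \<longrightarrow> b \<in> Y \<longrightarrow> sepp H a b \<longrightarrow>
     (\<exists>w w'. w \<in> Y \<and> w' \<in> Y \<and> E w w' \<and> sepp H w w')"
proof (induction n rule: less_induct)
  case (less n)
  show ?case
  proof (intro allI impI)
    fix a b assume dn: "d a b = n" and Y: "geod_closed E Y" and a: "a \<in> Y" and b: "b \<in> Y" and s: "sepp H a b"
    have "a \<noteq> b" using s by auto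
    then obtain a' where a': "E a a'" "d a' b + 1 = d a b" using step_toward by blast
    have "a' \<in> I a b" unfolding I_def' using a' d_edge by simp
    then have a'Y: "a' \<in> Y" using Y a b unfolding gc_def' by blast
    show "\<exists>w w'. w \<in> Y \<and> w' \<in> Y \<and> E w w' \<and> sepp H w w'"
    proof (cases "sepp H a a'")
      case True then show ?thesis using a a'Y a'(1) by blast
    next
      case False
      then have "sepp H a' b" using s sepp_xor by blast
      then show ?thesis using less.IH[of "d a' b"] a' dn Y a'Y b by auto
    qed
  qed
qed

lemma crosses_iff:
  assumes Y: "geod_closed E Y" and H: "H \<in> HP"
  shows "crosses H Y \<longleftrightarrow> (\<exists>a\<in>Y. \<exists>b\<in>Y. sepp H a b)"
proof -
  obtain u v where uv: "E u v" "H = hyperplane_of E u v" using H HP_iff by auto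
  show ?thesis
  proof
    assume "crosses H Y"
    then obtain f where f: "f \<in> H" "fst f \<in> Y" "snd f \<in> Y" unfolding crosses_def by auto
    then have "sepp H (fst f) (snd f)" using uv hyp_char[OF uv(1)] sepp_hyp[OF uv(1)] by auto
    then show "\<exists>a\<in>Y. \<exists>b\<in>Y. sepp H a b" using f by blast
  next
    assume "\<exists>a\<in>Y. \<exists>b\<in>Y. sepp H a b"
    then obtain w w' where w: "w \<in> Y" "w' \<in> Y" "E w w'" "sepp H w w'"
      using cross_edge_aux Y by blast
    then have "(w, w') \<in> H" using uv hyp_char[OF uv(1)] sepp_hyp[OF uv(1)] by auto
    then show "crosses H Y" unfolding crosses_def using w by force
  qed
qed

definition crossH where "crossH Y = {H \<in> HP. crosses H Y}"

lemma crossH_iff: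
  assumes Y: "geod_closed E Y"
  shows "H \<in> crossH Y \<longleftrightarrow> H \<in> HP \<and> (\<exists>a\<in>Y. \<exists>b\<in>Y. sepp H a b)"
  unfolding crossH_def using crosses_iff[OF Y] by auto

lemma sep_crossH: "geod_closed E Y \<Longrightarrow> a \<in> Y \<Longrightarrow> b \<in> Y \<Longrightarrow> sep a b \<subseteq> crossH Y"
  using crossH_iff unfolding sep_def by blast

lemma helly3:
  assumes "geod_closed E A" "geod_closed E B" "geod_closed E C"
    and "A \<inter> B \<noteq> {}" "B \<inter> C \<noteq> {}" "A \<inter> C \<noteq> {}"
  shows "A \<inter> B \<inter> C \<noteq> {}"
proof -
  obtain a b c where abc: "a \<in> A \<inter> B" "b \<in> B \<inter> C" "c \<in> A \<inter> C" using assms(4-6) by blast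
  let ?m = "med a b c"
  have "?m \<in> A" "?m \<in> B" "?m \<in> C"
    using med_in[of a b c] abc assms(1-3) unfolding gc_def' by blast+
  then show ?thesis by blast
qed

lemma helly_list:
  "(\<forall>A\<in>set L. geod_closed E A) \<longrightarrow> (\<forall>A\<in>set L. \<forall>B\<in>set L. A \<inter> B \<noteq> {}) \<longrightarrow> L \<noteq> [] \<longrightarrow> \<Inter>(set L) \<noteq> {}"
proof (induction L rule: length_induct)
  case (1 L0)
  show ?case
  proof (intro impI)
    assume p1: "\<forall>A\<in>set L0. geod_closed E A" and p2: "\<forall>A\<in>set L0. \<forall>B\<in>set L0. A \<inter> B \<noteq> {}" and ne: "L0 \<noteq> []"
    obtain A L where L0: "L0 = A # L" using ne by (cases L0) auto
    show "\<Inter>(set L0) \<noteq> {}"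
    proof (cases "L = []")
      case True then show ?thesis using p2 L0 by auto
    next
      case False
      let ?L = "map ((\<inter>) A) L"
      have 1: "\<forall>B\<in>set ?L. geod_closed E B" using p1 gc_Int L0 by auto
      have 2: "\<forall>B\<in>set ?L. \<forall>C\<in>set ?L. B \<inter> C \<noteq> {}"
      proof (intro ballI)
        fix B' C' assume "B' \<in> set ?L" "C' \<in> set ?L"
        then obtain B C where BC: "B \<in> set L" "C \<in> set L" "B' = A \<inter> B" "C' = A \<inter> C" by auto
        have "A \<inter> B \<inter> C \<noteq> {}"
          using helly3[of A B C] p1 p2 L0 BC(1,2) by (simp add: Int_commute)
        then show "B' \<inter> C' \<noteq> {}" using BC by blast
      qed
      have "length ?L < length L0" using L0 by simp
      then have "\<Inter>(set ?L) \<noteq> {}" using 1 2 False "1.IH" by blast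
      moreover have "\<Inter>(set ?L) = A \<inter> \<Inter>(set L)" using False by auto
      ultimately show ?thesis using L0 by simp
    qed
  qed
qed

lemma helly:
  assumes "finite F" "F \<noteq> {}" "\<forall>A\<in>F. geod_closed E A" "\<forall>A\<in>F. \<forall>B\<in>F. A \<inter> B \<noteq> {}"
  shows "\<Inter>F \<noteq> {}"
proof -
  obtain L where L: "set L = F" using finite_list[OF assms(1)] by blast
  then show ?thesis using helly_list[of L] assms by auto
qed

definition trans where "trans H K \<longleftrightarrow> (\<forall>\<alpha> \<beta>. \<exists>z. (z \<in> hs H \<longleftrightarrow> \<alpha>) \<and> (z \<in> hs K \<longleftrightarrow> \<beta>))"

lemma trans_irrefl: "\<not> trans H H"
  unfolding trans_def by blast

lemma trans_sym: "trans H K \<Longrightarrow> trans K H"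
  unfolding trans_def by blast

lemma trans_intro:
  assumes "sepp H a1 a2" "sepp H b1 b2" "sepp K a1 b1" "\<not> sepp K a1 a2" "\<not> sepp K b1 b2"
  shows "trans H K"
proof -
  have "\<forall>\<alpha> \<beta>. \<exists>z\<in>{a1, a2, b1, b2}. (z \<in> hs H \<longleftrightarrow> \<alpha>) \<and> (z \<in> hs K \<longleftrightarrow> \<beta>)"
    using assms unfolding sepp_def by auto
  then show ?thesis unfolding trans_def by blast
qed

lemma trans_pt: "trans H K \<Longrightarrow> \<exists>z. z \<in> hsx H x \<and> z \<in> hsx K y"
  unfolding trans_def hsx_def sepp_def by blast

lemma translate:
  assumes AB: "A \<union> B = sep x b" "A \<inter> B = {}" and tr: "\<forall>h\<in>A. \<forall>k\<in>B. trans h k"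
  shows "\<exists>y. sep x y = B \<and> sep y b = A"
proof -
  let ?F = "{I x b} \<union> (\<lambda>h. hsx h x) ` A \<union> (\<lambda>k. hsx k b) ` B"
  have fA: "finite A" "finite B" using AB(1) sep_finite by (metis finite_Un)+
  have HPs: "A \<subseteq> HP" "B \<subseteq> HP" using AB(1) sep_HP by auto
  have "\<Inter>?F \<noteq> {}"
  proof (rule helly)
    show "finite ?F" using fA by simp
    show "?F \<noteq> {}" by simp
    show "\<forall>C\<in>?F. geod_closed E C" using gc_I hsx_gc HPs by auto
    show "\<forall>C\<in>?F. \<forall>D\<in>?F. C \<inter> D \<noteq> {}"
    proof (intro ballI)
      fix C D assume C: "C \<in> ?F" and D: "D \<in> ?F"
      have xb: "x \<in> I x b" "b \<in> I x b" by auto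
      have pt: "\<And>h k. h \<in> A \<Longrightarrow> k \<in> B \<Longrightarrow> \<exists>z. z \<in> hsx h x \<and> z \<in> hsx k b"
        using tr trans_pt by blast
      have cs: "\<And>C. C \<in> ?F \<Longrightarrow> C = I x b \<or> (\<exists>h\<in>A. C = hsx h x) \<or> (\<exists>k\<in>B. C = hsx k b)" by blast
      have "\<exists>z. z \<in> C \<and> z \<in> D"
        using cs[OF C] cs[OF D]
      proof (elim disjE bexE)
      qed (use xb pt hsx_self in \<open>blast+\<close>)
      then show "C \<inter> D \<noteq> {}" by blast
    qed
  qed
  then obtain y where yF: "y \<in> \<Inter>?F" by blast
  have y: "y \<in> I x b" "\<forall>h\<in>A. y \<in> hsx h x" "\<forall>k\<in>B. y \<in> hsx k b"
  proof -
    show "y \<in> I x b" using InterD[OF yF, of "I x b"] by simp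
    show "\<forall>h\<in>A. y \<in> hsx h x"
    proof
      fix h assume "h \<in> A"
      then have "hsx h x \<in> ?F" by simp
      then show "y \<in> hsx h x" using InterD[OF yF] by blast
    qed
    show "\<forall>k\<in>B. y \<in> hsx k b"
    proof
      fix k assume "k \<in> B"
      then have "hsx k b \<in> ?F" by simp
      then show "y \<in> hsx k b" using InterD[OF yF] by blast
    qed
  qed
  have sxb: "sep x b = sep x y \<union> sep y b" "sep x y \<inter> sep y b = {}"
    using I_sep_union[OF y(1)] y(1) I_sep by auto
  have "sep x y = B"
  proof
    show "sep x y \<subseteq> B"
    proof
      fix H assume H: "H \<in> sep x y"
      then have "H \<notin> A" using y(2) unfolding hsx_def sep_def by auto
      then show "H \<in> B" using H sxb AB by blast
    qed
    show "B \<subseteq> sep x y"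
    proof
      fix H assume H: "H \<in> B"
      then have "sepp H x b" "\<not> sepp H b y" using AB(1) y(3) unfolding hsx_def sep_def by auto
      then have "sepp H x y" using sepp_xor sepp_sym by blast
      then show "H \<in> sep x y" using H HPs unfolding sep_def by auto
    qed
  qed
  moreover have "sep y b = A" using sxb AB calculation by blast
  ultimately show ?thesis by blast
qed


definition Oc where "Oc K c = {x. \<forall>H\<in>sep x c. \<forall>k\<in>K. trans H k}"

lemma Oc_c[simp]: "c \<in> Oc K c" unfolding Oc_def by simp

lemma Oc_mono: "K \<subseteq> K' \<Longrightarrow> Oc K' c \<subseteq> Oc K c" unfolding Oc_def by blast

lemma Oc_Un: "Oc (K \<union> K') c = Oc K c \<inter> Oc K' c" unfolding Oc_def by blast

lemma Oc_empty: "Oc {} c = UNIV" unfolding Oc_def by simp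

lemma Oc_insert: "Oc (insert k K) c = Oc {k} c \<inter> Oc K c" unfolding Oc_def by blast

lemma Oc_gc: "geod_closed E (Oc K c)"
  unfolding gc_def'
proof (intro ballI subsetI)
  fix x y z assume x: "x \<in> Oc K c" and y: "y \<in> Oc K c" and z: "z \<in> I x y"
  have "H \<in> sep x c \<or> H \<in> sep y c" if H: "H \<in> sep z c" for H
  proof (rule ccontr)
    assume "\<not> (H \<in> sep x c \<or> H \<in> sep y c)"
    then have "\<not> sepp H x c" "\<not> sepp H y c" "sepp H z c" "H \<in> HP" using H unfolding sep_def by auto
    moreover have "\<not> (sepp H x z \<and> sepp H z y)" using z \<open>H \<in> HP\<close> unfolding I_sepp by auto
    ultimately show False unfolding sepp_def by blast
  qed
  then show "z \<in> Oc K c" using x y unfolding Oc_def by blast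
qed

lemma Oc_convex: "convex_sub E (Oc K c)"
  unfolding convex_sub_def using Oc_gc Oc_c by blast

lemma Oc_sep: "x \<in> Oc K c \<Longrightarrow> y \<in> Oc K c \<Longrightarrow> H \<in> sep x y \<Longrightarrow> k \<in> K \<Longrightarrow> trans H k"
  unfolding Oc_def using sep_tri[of x y c] sep_sym[of c y] by blast

lemma Oc_base: "x \<in> Oc K c \<Longrightarrow> Oc K x = Oc K c"
proof
  assume x: "x \<in> Oc K c"
  show "Oc K x \<subseteq> Oc K c"
  proof
    fix z assume "z \<in> Oc K x"
    then show "z \<in> Oc K c" using x sep_tri[of z c x] unfolding Oc_def by blast
  qed
  show "Oc K c \<subseteq> Oc K x"
  proof
    fix z assume "z \<in> Oc K c"
    then show "z \<in> Oc K x" using x sep_tri[of z x c] sep_sym[of c x] unfolding Oc_def by blast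
  qed
qed

lemma Oc_notin: "x \<in> Oc K c \<Longrightarrow> k \<in> K \<Longrightarrow> k \<notin> sep x c"
  unfolding Oc_def using trans_irrefl by blast

lemma comb_iff: "x \<in> comb_hyperplane E u v \<longleftrightarrow> (\<exists>y. (x, y) \<in> hyperplane_of E u v) \<and> x \<in> W u v"
  unfolding comb_hyperplane_def W_def by simp

lemma sep_insert_edge:
  assumes e: "E a b" and nin: "hyperplane_of E a b \<notin> sep x a"
  shows "sep x b = insert (hyperplane_of E a b) (sep x a)"
proof -
  have "H \<in> sep x b \<longleftrightarrow> H \<in> HP \<and> (H \<in> sep x a \<longleftrightarrow> H \<notin> sep a b)" for H using sep_xor by blast
  note xr = this
  show ?thesis
  proof (rule set_eqI)
    fix H
    show "H \<in> sep x b \<longleftrightarrow> H \<in> insert (hyperplane_of E a b) (sep x a)"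
    proof (cases "H = hyperplane_of E a b")
      case True
      then show ?thesis using xr[of H] sep_edge[OF e] nin hyp_in_HP[OF e] by simp
    next
      case False
      then have "H \<notin> sep a b" using sep_edge[OF e] by simp
      then show ?thesis using xr[of H] False sep_HP[of x a] by auto
    qed
  qed
qed

lemma comb_Oc:
  assumes e: "E u v"
  shows "comb_hyperplane E u v = Oc {hyperplane_of E u v} u"
proof
  let ?k = "hyperplane_of E u v"
  show "comb_hyperplane E u v \<subseteq> Oc {?k} u"
  proof
    fix x assume "x \<in> comb_hyperplane E u v"
    then obtain x' where xx: "(x, x') \<in> ?k" and xW: "x \<in> W u v" using comb_iff by blast
    have ex: "E x x'" and x'W: "x' \<notin> W u v" using xx xW hyp_char[OF e] by auto
    have "trans H ?k" if H: "H \<in> sep x u" for H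
    proof -
      have sH: "sepp H x u" "H \<in> HP" using H unfolding sep_def by auto
      have nk: "\<not> sepp ?k x u" using sepp_hyp[OF e] xW W_self[OF e] by simp
      then have "H \<noteq> ?k" using sH by auto
      moreover have "hyperplane_of E x x' = ?k" using hyp_eq[OF e xx] .
      ultimately have "\<not> sepp H x x'" "\<not> sepp H u v" using sep_edge[OF ex] sep_edge[OF e] sH(2) unfolding sep_def by auto
      then have "sepp H x' v" using sH(1) unfolding sepp_def by blast
      moreover have "sepp ?k x x'" "\<not> sepp ?k x' v" using sepp_hyp[OF e] xW x'W W_other[OF e] by auto
      ultimately show ?thesis using trans_intro[of H x u x' v ?k] sH(1) nk by blast
    qed
    then show "x \<in> Oc {?k} u" unfolding Oc_def by blast
  qed
  show "Oc {?k} u \<subseteq> comb_hyperplane E u v"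
  proof
    fix x assume x: "x \<in> Oc {?k} u"
    have nk: "?k \<notin> sep x u" using Oc_notin[OF x] by simp
    then have xW: "x \<in> W u v" using sepp_hyp[OF e] W_self[OF e] hyp_in_HP[OF e] unfolding sep_def by auto
    have sxv: "sep x v = insert ?k (sep x u)" using sep_insert_edge[OF e nk] .
    have "\<exists>y. sep x y = {?k} \<and> sep y v = sep x u"
      by (rule translate) (use sxv nk x in \<open>auto simp: Oc_def\<close>)
    then obtain y where y: "sep x y = {?k}" by blast
    then have "d x y = 1" using d_card by simp
    then have exy: "E x y" by (rule d_one)
    have "sepp ?k x y" using y unfolding sep_def by auto
    then have "(x, y) \<in> ?k" using hyp_char[OF e] sepp_hyp[OF e] exy by auto
    then show "x \<in> comb_hyperplane E u v" using comb_iff xW by blast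
  qed
qed

lemma comb_convex: "E u v \<Longrightarrow> convex_sub E (comb_hyperplane E u v)"
  using comb_Oc Oc_convex by simp

lemma gate_nonexp:
  assumes Y: "convex_sub E Y"
  shows "sep (gate E Y a) (gate E Y b) \<subseteq> sep a b"
proof
  fix H assume H: "H \<in> sep (gate E Y a) (gate E Y b)"
  have hp: "H \<in> HP" using H sep_HP by auto
  have "gate E Y a \<in> I a (gate E Y b)" "gate E Y b \<in> I b (gate E Y a)"
    using gate_props[OF Y] by blast+
  then have "\<not> sepp H a (gate E Y a)" "\<not> sepp H b (gate E Y b)"
    using H hp unfolding I_sepp sep_def by (auto simp: sepp_sym)
  then have "sepp H a b" using H unfolding sep_def sepp_def by blast
  then show "H \<in> sep a b" using hp unfolding sep_def by auto
qed

lemma trans_comb_side: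
  assumes e: "E u v" and H: "H \<in> HP" and tr: "trans H (hyperplane_of E u v)"
  shows "\<exists>z\<in>comb_hyperplane E u v. \<not> sepp H p z"
proof -
  let ?k = "hyperplane_of E u v"
  obtain a where a: "a \<in> hsx H p" "a \<in> hsx ?k u" using trans_pt[OF tr] by blast
  obtain b where b: "b \<in> hsx H p" "b \<in> hsx ?k v" using trans_pt[OF tr] by blast
  have skuv: "sepp ?k u v" using sepp_hyp[OF e] W_self[OF e] W_other[OF e] by simp
  have "sepp ?k a b" using a(2) b(2) skuv unfolding hsx_def sepp_def by blast
  then obtain w w' where w: "w \<in> hsx H p" "w' \<in> hsx H p" "E w w'" "sepp ?k w w'"
    using cross_edge_aux hsx_gc[OF H] a(1) b(1) by blast
  show ?thesis
  proof (cases "w \<in> W u v")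
    case True
    then have "(w, w') \<in> ?k" using w hyp_char[OF e] sepp_hyp[OF e] by auto
    then have "w \<in> comb_hyperplane E u v" using comb_iff True by blast
    then show ?thesis using w(1) unfolding hsx_def by blast
  next
    case False
    then have "w' \<in> W u v" using w(4) sepp_hyp[OF e] by auto
    moreover have "E w' w" using w(3) E_sym by simp
    ultimately have "(w', w) \<in> ?k" using w hyp_char[OF e] sepp_hyp[OF e] by auto
    then have "w' \<in> comb_hyperplane E u v" using comb_iff \<open>w' \<in> W u v\<close> by blast
    then show ?thesis using w(2) unfolding hsx_def by blast
  qed
qed

lemma trans_comb:
  assumes e: "E u v" and H: "H \<in> HP" and tr: "trans H (hyperplane_of E u v)"
  shows "\<exists>z1\<in>comb_hyperplane E u v. \<exists>z2\<in>comb_hyperplane E u v. sepp H z1 z2"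
proof -
  obtain q where q: "sepp H u q" using tr unfolding trans_def sepp_def by blast
  obtain z1 where z1: "z1 \<in> comb_hyperplane E u v" "\<not> sepp H u z1" using trans_comb_side[OF e H tr] by blast
  obtain z2 where z2: "z2 \<in> comb_hyperplane E u v" "\<not> sepp H q z2" using trans_comb_side[OF e H tr] by blast
  have "sepp H z1 z2" using q z1(2) z2(2) unfolding sepp_def by blast
  then show ?thesis using z1 z2 by blast
qed


lemma ne_int: "x \<in> S \<Longrightarrow> S \<noteq> {}" by auto

lemma gate_Int:
  assumes Y: "convex_sub E Y" and Z: "convex_sub E Z" and ne: "Y \<inter> Z \<noteq> {}"
  shows "gate E Y ` Z = Y \<inter> Z"
proof
  obtain w where w: "w \<in> Y" "w \<in> Z" using ne by blast
  show "gate E Y ` Z \<subseteq> Y \<inter> Z"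
  proof
    fix g assume "g \<in> gate E Y ` Z"
    then obtain z where z: "z \<in> Z" "g = gate E Y z" by blast
    have "g \<in> Y" "g \<in> I z w" using gate_props[OF Y] z w by auto
    then show "g \<in> Y \<inter> Z" using Z z(1) w(2) unfolding convex_sub_def gc_def' by blast
  qed
  show "Y \<inter> Z \<subseteq> gate E Y ` Z"
  proof
    fix x assume "x \<in> Y \<inter> Z"
    then show "x \<in> gate E Y ` Z" using gate_id[OF Y] by (metis IntE image_eqI)
  qed
qed

lemma comb_in_hc: "E u v \<Longrightarrow> comb_hyperplane E u v \<in> hyperclosure E"
  by (rule hyperclosure.combhyp) (auto simp: comb_hyperplanes_def)

lemma L1_aux:
  "\<forall>c u v. d c (gate E (comb_hyperplane E u v) c) = n \<longrightarrow> E u v \<longrightarrow> c \<in> W u v \<longrightarrow>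
     Oc {hyperplane_of E u v} c \<in> hyperclosure E"
proof (induction n rule: less_induct)
  case (less n)
  show ?case
  proof (intro allI impI)
    fix c u v
    assume dn: "d c (gate E (comb_hyperplane E u v) c) = n" and e: "E u v" and cW: "c \<in> W u v"
    let ?F0 = "comb_hyperplane E u v"
    let ?k = "hyperplane_of E u v"
    let ?p = "gate E ?F0 c"
    have F0c: "convex_sub E ?F0" using comb_convex[OF e] .
    have pF0: "?p \<in> ?F0" using gate_props(1)[OF F0c] .
    have F0O: "?F0 = Oc {?k} u" using comb_Oc[OF e] .
    have kHP: "?k \<in> HP" using hyp_in_HP[OF e] .
    show "Oc {?k} c \<in> hyperclosure E"
    proof (cases "c \<in> ?F0")
      case True
      then have "Oc {?k} c = ?F0" using Oc_base F0O by simp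
      then show ?thesis using comb_in_hc[OF e] by simp
    next
      case False
      then have pc: "?p \<noteq> c" using pF0 by auto
      then obtain c1 where c1: "E c c1" "d c1 ?p + 1 = d c ?p" using step_toward[of c ?p] by auto
      have c1I: "c1 \<in> I c ?p" unfolding I_def' using c1 d_edge by simp
      have pW: "?p \<in> W u v" using pF0 comb_iff by blast
      have c1W: "c1 \<in> W u v" using W_convex[OF e cW pW c1I] .
      have "gate E ?F0 c1 \<in> I c1 ?p" using gate_props(2)[OF F0c pF0] .
      then have "d c1 (gate E ?F0 c1) \<le> d c1 ?p" unfolding I_def' by linarith
      then have lt: "d c1 (gate E ?F0 c1) < n" using c1(2) dn by linarith
      have IH: "Oc {?k} c1 \<in> hyperclosure E" using less.IH[OF lt] e c1W by blast
      let ?s = "hyperplane_of E c c1"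
      let ?C = "comb_hyperplane E c c1"
      have sHP: "?s \<in> HP" using hyp_in_HP[OF c1(1)] .
      have sep_cc1: "sep c c1 = {?s}" using sep_edge[OF c1(1)] .
      have "?s \<in> sep c ?p" using I_sep_union[OF c1I] sep_cc1 by blast
      then have f1: "\<forall>z\<in>?F0. sepp ?s c z" using gate_sep[OF F0c] by blast
      have f2: "\<not> trans ?s ?k"
      proof
        assume "trans ?s ?k"
        then obtain z1 z2 where "z1 \<in> ?F0" "z2 \<in> ?F0" "sepp ?s z1 z2" using trans_comb[OF e sHP] by blast
        then show False using f1 unfolding sepp_def by blast
      qed
      have f3: "x \<in> Oc {?s} c" if x: "x \<in> Oc {?k} c" for x
      proof -
        have "trans H ?s" if H: "H \<in> sep x c" for H
        proof -
          have hp: "H \<in> HP" using H sep_HP by auto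
          have "trans H ?k" using x H unfolding Oc_def by blast
          then obtain z1 z2 where z: "z1 \<in> ?F0" "z2 \<in> ?F0" "sepp H z1 z2" using trans_comb[OF e hp] by blast
          have "?s \<notin> sep x c" using x f2 unfolding Oc_def by blast
          then have nsx: "\<not> sepp ?s x c" using sHP unfolding sep_def by auto
          have "sepp ?s x z1" "\<not> sepp ?s z1 z2" using nsx f1 z unfolding sepp_def by blast+
          moreover have "sepp H x c" using H unfolding sep_def by auto
          ultimately show ?thesis using trans_intro[of H x c z1 z2 ?s] z(3) nsx by blast
        qed
        then show ?thesis unfolding Oc_def by blast
      qed
      have f4: "Oc {?s} c = ?C" using comb_Oc[OF c1(1)] by simp
      have Cc: "convex_sub E ?C" using comb_convex[OF c1(1)] .
      have Cs: "?s \<notin> sep a b" if "a \<in> ?C" "b \<in> ?C" for a b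
        using Oc_sep[of a "{?s}" c b ?s] that f4 trans_irrefl by blast
      have cC: "c \<in> ?C" using f4 Oc_c by blast
      have gc1: "gate E ?C c1 = c"
      proof (rule gate_char[OF Cc])
        show "c \<in> ?C" using f4 Oc_c by blast
        show "\<forall>z\<in>?C. c \<in> I c1 z"
        proof
          fix z assume "z \<in> ?C"
          then have "?s \<notin> sep c z" using Cs cC by blast
          then show "c \<in> I c1 z" unfolding I_sep using sep_cc1 sep_sym[of c1 c] by auto
        qed
      qed
      have "Oc {?k} c = gate E ?C ` Oc {?k} c1"
      proof
        show "Oc {?k} c \<subseteq> gate E ?C ` Oc {?k} c1"
        proof
          fix x assume x: "x \<in> Oc {?k} c"
          then have xC: "x \<in> ?C" using f3 f4 by blast
          then obtain x' where xx: "(x, x') \<in> ?s" using comb_iff by blast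
          have ex: "E x x'" using xx hyp_char[OF c1(1)] by auto
          have hx: "hyperplane_of E x x' = ?s" using hyp_eq[OF c1(1) xx] .
          have sxx: "sep x x' = {?s}" using sep_edge[OF ex] hx by simp
          have nsxc: "?s \<notin> sep x c" using Cs xC cC by blast
          have "sep x' c1 = sep x c"
          proof (rule set_eqI)
            fix H
            have a1: "H \<in> sep x' c1 \<longleftrightarrow> H \<in> HP \<and> (H \<in> sep x' x \<longleftrightarrow> H \<notin> sep x c1)" using sep_xor by blast
            have a2: "H \<in> sep x c1 \<longleftrightarrow> H \<in> HP \<and> (H \<in> sep x c \<longleftrightarrow> H \<notin> sep c c1)" using sep_xor by blast
            have a3: "H \<in> sep x' x \<longleftrightarrow> H = ?s" using sxx sep_sym[of x' x] by auto
            have a4: "H \<in> sep c c1 \<longleftrightarrow> H = ?s" using sep_cc1 by auto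
            show "H \<in> sep x' c1 \<longleftrightarrow> H \<in> sep x c"
              using a1 a2 a3 a4 nsxc sHP sep_HP[of x c] by blast
          qed
          then have x'O: "x' \<in> Oc {?k} c1" using x unfolding Oc_def by simp
          have "gate E ?C x' = x"
          proof (rule gate_char[OF Cc xC])
            show "\<forall>z\<in>?C. x \<in> I x' z"
            proof
              fix z assume "z \<in> ?C"
              then have "?s \<notin> sep x z" using Cs xC by blast
              then show "x \<in> I x' z" unfolding I_sep using sxx sep_sym[of x' x] by auto
            qed
          qed
          then show "x \<in> gate E ?C ` Oc {?k} c1" using x'O by force
        qed
        show "gate E ?C ` Oc {?k} c1 \<subseteq> Oc {?k} c"
        proof
          fix z assume "z \<in> gate E ?C ` Oc {?k} c1"
          then obtain y where y: "y \<in> Oc {?k} c1" "z = gate E ?C y" by blast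
          have "sep z c \<subseteq> sep y c1" using gate_nonexp[OF Cc, of y c1] y(2) gc1 by simp
          then show "z \<in> Oc {?k} c" using y(1) unfolding Oc_def by blast
        qed
      qed
      moreover have "gate E ?C ` Oc {?k} c1 \<in> hyperclosure E"
        by (rule hyperclosure.gate_img[OF comb_in_hc[OF c1(1)] IH])
      ultimately show ?thesis by simp
    qed
  qed
qed

lemma L1:
  assumes k: "k \<in> HP"
  shows "Oc {k} c \<in> hyperclosure E"
proof -
  obtain u v where uv: "E u v" "k = hyperplane_of E u v" using k HP_iff by auto
  show ?thesis
  proof (cases "c \<in> W u v")
    case True
    then show ?thesis using L1_aux uv by blast
  next
    case False
    then have "c \<in> W v u" using W_compl[OF uv(1)] by simp
    moreover have "k = hyperplane_of E v u" using hyp_swap[OF uv(1)] uv(2) by simp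
    ultimately show ?thesis using L1_aux E_sym[OF uv(1)] by blast
  qed
qed

lemma Oc_finite_hc:
  assumes "finite K" "K \<subseteq> HP"
  shows "Oc K c \<in> hyperclosure E"
  using assms
proof (induction K rule: finite_induct)
  case empty
  then show ?case using Oc_empty hyperclosure.whole by simp
next
  case (insert k K)
  have 1: "Oc {k} c \<in> hyperclosure E" using L1 insert by simp
  have 2: "Oc K c \<in> hyperclosure E" using insert by simp
  have cin: "c \<in> Oc {k} c \<inter> Oc K c" by simp
  then have ne: "Oc {k} c \<inter> Oc K c \<noteq> {}" by (rule ne_int)
  have "gate E (Oc {k} c) ` Oc K c = Oc {k} c \<inter> Oc K c"
    by (rule gate_Int[OF Oc_convex Oc_convex ne])
  then have "Oc (insert k K) c = gate E (Oc {k} c) ` Oc K c" using Oc_insert[of k K c] by simp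
  then show ?case using hyperclosure.gate_img[OF 1 2] by simp
qed


lemma trans_intro2:
  assumes "sepp K a b" "sepp K a' b'" "sepp H a a'" "\<not> sepp H a b" "\<not> sepp H a' b'"
  shows "trans H K"
proof -
  have "\<forall>\<alpha> \<beta>. \<exists>z\<in>{a, b, a', b'}. (z \<in> hs H \<longleftrightarrow> \<alpha>) \<and> (z \<in> hs K \<longleftrightarrow> \<beta>)"
    using assms unfolding sepp_def by auto
  then show ?thesis unfolding trans_def by blast
qed

definition Q where "Q C = {x. \<forall>h\<in>sep x (gate E C x). \<forall>k\<in>crossH C. trans h k}"

lemma cs_gc: "convex_sub E C \<Longrightarrow> geod_closed E C" unfolding convex_sub_def by simp

lemma Q_gc:
  assumes C: "convex_sub E C"
  shows "geod_closed E (Q C)"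
  unfolding gc_def'
proof (intro ballI subsetI)
  fix x y z assume x: "x \<in> Q C" and y: "y \<in> Q C" and z: "z \<in> I x y"
  show "z \<in> Q C" unfolding Q_def
  proof (intro CollectI ballI)
    fix h k assume h: "h \<in> sep z (gate E C z)" and k: "k \<in> crossH C"
    have hz: "h \<in> HP" "\<forall>w\<in>C. sepp h z w" using h gate_sep[OF C] by auto
    have "\<not> sepp h x z \<or> \<not> sepp h z y" using z hz(1) unfolding I_sepp by auto
    then show "trans h k"
    proof
      assume "\<not> sepp h x z"
      then have "\<forall>w\<in>C. sepp h x w" using hz(2) sepp_xor by blast
      then have "h \<in> sep x (gate E C x)" using gate_sep[OF C] hz(1) by blast
      then show ?thesis using x k unfolding Q_def by blast
    next
      assume "\<not> sepp h z y"
      then have "\<forall>w\<in>C. sepp h y w" using hz(2) sepp_xor sepp_sym by blast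
      then have "h \<in> sep y (gate E C y)" using gate_sep[OF C] hz(1) by blast
      then show ?thesis using y k unfolding Q_def by blast
    qed
  qed
qed

lemma parallel_crossH:
  assumes "geod_closed E Y" "geod_closed E Z" "parallel E Y Z"
  shows "crossH Y = crossH Z"
  using assms unfolding parallel_def crossH_def by auto

lemma par_sub_Q:
  assumes C: "convex_sub E C" and B: "convex_sub E B" and par: "parallel E C B"
  shows "B \<subseteq> Q C"
proof
  fix x assume x: "x \<in> B"
  have cr: "crossH C = crossH B" using parallel_crossH[OF cs_gc[OF C] cs_gc[OF B] par] .
  show "x \<in> Q C" unfolding Q_def
  proof (intro CollectI ballI)
    fix h k assume h: "h \<in> sep x (gate E C x)" and k: "k \<in> crossH C"
    have hx: "h \<in> HP" "\<forall>w\<in>C. sepp h x w" using h gate_sep[OF C] by auto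
    have "h \<notin> crossH C"
    proof
      assume "h \<in> crossH C"
      then obtain a b where "a \<in> C" "b \<in> C" "sepp h a b" using crossH_iff[OF cs_gc[OF C]] by blast
      then show False using hx(2) unfolding sepp_def by blast
    qed
    then have hB: "h \<notin> crossH B" using cr by simp
    obtain a b where ab: "a \<in> C" "b \<in> C" "sepp k a b" using k crossH_iff[OF cs_gc[OF C]] by blast
    obtain a' b' where ab': "a' \<in> B" "b' \<in> B" "sepp k a' b'"
      using k cr crossH_iff[OF cs_gc[OF B]] by blast
    have nB: "\<not> sepp h p q" if "p \<in> B" "q \<in> B" for p q
      using hB that hx(1) crossH_iff[OF cs_gc[OF B]] by blast
    have "\<not> sepp h a b" using hx(2) ab unfolding sepp_def by blast
    moreover have "sepp h a a'" using hx(2) ab(1) nB[OF x ab'(1)] unfolding sepp_def by blast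
    ultimately show "trans h k" using trans_intro2[OF ab(3) ab'(3)] nB[OF ab'(1,2)] by blast
  qed
qed

lemma hull_sub: "geod_closed E Y \<Longrightarrow> S \<subseteq> Y \<Longrightarrow> convex_hull_sub E S \<subseteq> Y"
  unfolding convex_hull_sub_def by blast

lemma hull_sup: "S \<subseteq> convex_hull_sub E S"
  unfolding convex_hull_sub_def by blast

lemma hull_gc: "geod_closed E (convex_hull_sub E S)"
  unfolding convex_hull_sub_def gc_def' by blast

lemma translate_gate:
  assumes C: "convex_sub E C" and x: "x \<in> Q C" and b: "b \<in> C"
  shows "\<exists>y. sep x y = sep (gate E C x) b \<and> sep y b = sep x (gate E C x) \<and> gate E C y = b"
proof -
  let ?a = "gate E C x"
  let ?S = "sep x ?a"
  have aI: "?a \<in> I x b" using gate_props[OF C] b by blast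
  have aC: "?a \<in> C" using gate_props[OF C] by blast
  have "\<exists>y. sep x y = sep ?a b \<and> sep y b = ?S"
  proof (rule translate)
    show "?S \<union> sep ?a b = sep x b" using I_sep_union[OF aI] by simp
    show "?S \<inter> sep ?a b = {}" using aI I_sep by simp
    show "\<forall>h\<in>?S. \<forall>k\<in>sep ?a b. trans h k"
      using x sep_crossH[OF cs_gc[OF C] aC b] unfolding Q_def by blast
  qed
  then obtain y where y: "sep x y = sep ?a b" "sep y b = ?S" by blast
  have "gate E C y = b"
  proof (rule gate_char[OF C b])
    show "\<forall>w\<in>C. b \<in> I y w"
    proof
      fix w assume w: "w \<in> C"
      have "sep y b \<inter> sep b w = {}"
      proof (rule ccontr)
        assume "sep y b \<inter> sep b w \<noteq> {}"
        then obtain h where h: "h \<in> ?S" "h \<in> sep b w" using y(2) by blast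
        then have "\<forall>z\<in>C. sepp h x z" using gate_sep[OF C] by blast
        then have "\<not> sepp h b w" using b w unfolding sepp_def by blast
        then show False using h(2) unfolding sep_def by auto
      qed
      then show "b \<in> I y w" unfolding I_sep .
    qed
  qed
  then show ?thesis using y by blast
qed

lemma Q_sub_hull:
  assumes C: "convex_sub E C"
  shows "Q C \<subseteq> parallel_hull E C"
proof
  fix x assume x: "x \<in> Q C"
  define S where "S = sep x (gate E C x)"
  define B where "B = {y. sep y (gate E C y) = S}"
  have xB: "x \<in> B" unfolding B_def S_def by simp
  have sepB: "H \<in> S \<longleftrightarrow> H \<in> HP \<and> (\<forall>w\<in>C. sepp H y w)" if "y \<in> B" for y H
    using that gate_sep[OF C] unfolding B_def by blast
  have Bgc: "geod_closed E B"
    unfolding gc_def'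
  proof (intro ballI subsetI)
    fix y1 y2 z assume y1: "y1 \<in> B" and y2: "y2 \<in> B" and z: "z \<in> I y1 y2"
    have "sep z (gate E C z) = S"
    proof (rule set_eqI)
      fix H
      show "H \<in> sep z (gate E C z) \<longleftrightarrow> H \<in> S"
      proof
        assume H: "H \<in> sep z (gate E C z)"
        then have Hz: "H \<in> HP" "\<forall>w\<in>C. sepp H z w" using gate_sep[OF C] by auto
        have "\<not> sepp H y1 z \<or> \<not> sepp H z y2" using z Hz(1) unfolding I_sepp by auto
        then show "H \<in> S"
        proof
          assume "\<not> sepp H y1 z"
          then have "\<forall>w\<in>C. sepp H y1 w" using Hz(2) sepp_xor by blast
          then show ?thesis using sepB[OF y1] Hz(1) by blast
        next
          assume "\<not> sepp H z y2"
          then have "\<forall>w\<in>C. sepp H y2 w" using Hz(2) sepp_xor sepp_sym by blast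
          then show ?thesis using sepB[OF y2] Hz(1) by blast
        qed
      next
        assume H: "H \<in> S"
        then have h1: "H \<in> HP" "\<forall>w\<in>C. sepp H y1 w" "\<forall>w\<in>C. sepp H y2 w" using sepB y1 y2 by blast+
        obtain w0 where w0: "w0 \<in> C" using C unfolding convex_sub_def by blast
        have "\<not> sepp H y1 y2" using h1 w0 unfolding sepp_def by blast
        moreover have "\<not> (sepp H y1 z \<and> sepp H z y2)" using z h1(1) unfolding I_sepp by auto
        ultimately have "\<not> sepp H y1 z" unfolding sepp_def by blast
        then have "\<forall>w\<in>C. sepp H z w" using h1(2) sepp_xor by blast
        then show "H \<in> sep z (gate E C z)" using gate_sep[OF C] h1(1) by blast
      qed
    qed
    then show "z \<in> B" unfolding B_def by simp
  qed
  have Bc: "convex_sub E B" unfolding convex_sub_def using Bgc xB by blast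
  have tr: "\<exists>y\<in>B. sep y b = S" if bC: "b \<in> C" for b
  proof -
    obtain y where y: "sep y b = S" "gate E C y = b" using translate_gate[OF C x bC] unfolding S_def by blast
    then have "y \<in> B" unfolding B_def by simp
    then show ?thesis using y by blast
  qed
  have par: "parallel E C B"
    unfolding parallel_def
  proof (intro ballI)
    fix H assume H: "H \<in> HP"
    have nS: "H \<notin> S" if "a \<in> C" "b \<in> C" "sepp H a b" for a b
    proof
      assume "H \<in> S"
      then have "\<forall>w\<in>C. sepp H x w" using sepB[OF xB] by blast
      then show False using that unfolding sepp_def by blast
    qed
    show "crosses H C \<longleftrightarrow> crosses H B"
    proof
      assume "crosses H C"
      then obtain a b where ab: "a \<in> C" "b \<in> C" "sepp H a b" using crosses_iff[OF cs_gc[OF C] H] by blast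
      obtain ya yb where y: "ya \<in> B" "sep ya a = S" "yb \<in> B" "sep yb b = S" using tr ab by blast
      have "H \<notin> S" using nS ab by blast
      then have "\<not> sepp H ya a" "\<not> sepp H yb b" using y H unfolding sep_def by auto
      then have "sepp H ya yb" using ab(3) unfolding sepp_def by blast
      then show "crosses H B" using crosses_iff[OF Bgc H] y by blast
    next
      assume "crosses H B"
      then obtain y1 y2 where yy: "y1 \<in> B" "y2 \<in> B" "sepp H y1 y2" using crosses_iff[OF Bgc H] by blast
      obtain w0 where w0: "w0 \<in> C" using C unfolding convex_sub_def by blast
      have "H \<notin> S"
      proof
        assume "H \<in> S"
        then have "sepp H y1 w0" "sepp H y2 w0" using sepB yy w0 by blast+
        then show False using yy(3) unfolding sepp_def by blast
      qed
      then have "H \<notin> sep y1 (gate E C y1)" "H \<notin> sep y2 (gate E C y2)" using yy unfolding B_def by auto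
      then have "\<not> sepp H y1 (gate E C y1)" "\<not> sepp H y2 (gate E C y2)" using H unfolding sep_def by auto
      then have "sepp H (gate E C y1) (gate E C y2)" using yy(3) unfolding sepp_def by blast
      moreover have "gate E C y1 \<in> C" "gate E C y2 \<in> C" using gate_props[OF C] by auto
      ultimately show "crosses H C" using crosses_iff[OF cs_gc[OF C] H] by blast
    qed
  qed
  have "x \<in> \<Union>{B. convex_sub E B \<and> parallel E C B}" using Bc par xB by blast
  then show "x \<in> parallel_hull E C" unfolding parallel_hull_def by (rule subsetD[OF hull_sup])
qed

lemma hull_eq_Q:
  assumes C: "convex_sub E C"
  shows "parallel_hull E C = Q C"
proof
  show "parallel_hull E C \<subseteq> Q C"
    unfolding parallel_hull_def
    by (rule hull_sub[OF Q_gc[OF C]]) (use par_sub_Q[OF C] in blast)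
  show "Q C \<subseteq> parallel_hull E C" using Q_sub_hull[OF C] .
qed

lemma orth_Oc:
  assumes C: "convex_sub E C" and c: "c \<in> C"
  shows "orth_compl E C c = Oc (crossH C) c"
proof
  show "orth_compl E C c \<subseteq> Oc (crossH C) c"
    unfolding orth_compl_def hull_eq_Q[OF C] Q_def Oc_def by auto
  show "Oc (crossH C) c \<subseteq> orth_compl E C c"
  proof
    fix x assume x: "x \<in> Oc (crossH C) c"
    let ?g = "gate E C x"
    have gc: "?g = c"
    proof (rule ccontr)
      assume "?g \<noteq> c"
      then obtain h where h: "h \<in> sep ?g c" using sep_empty_iff by blast
      have gC: "?g \<in> C" "?g \<in> I x c" using gate_props[OF C] c by auto
      have "h \<in> crossH C" using sep_crossH[OF cs_gc[OF C] gC(1) c] h by blast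
      moreover have "h \<in> sep x c" using I_sep_union[OF gC(2)] h by blast
      ultimately show False using x trans_irrefl unfolding Oc_def by blast
    qed
    then have "x \<in> Q C" using x unfolding Q_def Oc_def by simp
    then show "x \<in> orth_compl E C c" unfolding orth_compl_def hull_eq_Q[OF C] using gc by simp
  qed
qed


lemma sep_I_sub: "z \<in> I x y \<Longrightarrow> sep z c \<subseteq> sep x c \<union> sep y c"
proof
  fix H assume z: "z \<in> I x y" and H: "H \<in> sep z c"
  show "H \<in> sep x c \<union> sep y c"
  proof (rule ccontr)
    assume "H \<notin> sep x c \<union> sep y c"
    then have "\<not> sepp H x c" "\<not> sepp H y c" "sepp H z c" "H \<in> HP" using H unfolding sep_def by auto
    moreover have "\<not> (sepp H x z \<and> sepp H z y)" using z \<open>H \<in> HP\<close> unfolding I_sepp by auto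
    ultimately show False unfolding sepp_def by blast
  qed
qed

lemma closest_pair:
  assumes F1: "convex_sub E F1" and F2: "convex_sub E F2"
  shows "\<exists>p q. p \<in> F1 \<and> q \<in> F2 \<and> gate E F2 p = q \<and> gate E F1 q = p"
proof -
  obtain a b where ab: "a \<in> F1" "b \<in> F2" using F1 F2 unfolding convex_sub_def by blast
  obtain pq where pq: "fst pq \<in> F1 \<and> snd pq \<in> F2"
    "\<forall>r. fst r \<in> F1 \<and> snd r \<in> F2 \<longrightarrow> d (fst pq) (snd pq) \<le> d (fst r) (snd r)"
    using ex_has_least_nat[of "\<lambda>r. fst r \<in> F1 \<and> snd r \<in> F2" "(a, b)" "\<lambda>r. d (fst r) (snd r)"] ab by auto
  define p where "p = fst pq"
  define q where "q = snd pq"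
  have pq1: "p \<in> F1" "q \<in> F2" using pq(1) unfolding p_def q_def by auto
  have mn: "\<And>p' q'. p' \<in> F1 \<Longrightarrow> q' \<in> F2 \<Longrightarrow> d p q \<le> d p' q'"
    using pq(2) unfolding p_def q_def by (metis fst_conv snd_conv)
  have g2: "gate E F2 p = q"
  proof -
    let ?g = "gate E F2 p"
    have "?g \<in> F2" "?g \<in> I p q" using gate_props[OF F2] pq1 by auto
    moreover then have "d p q \<le> d p ?g" using mn pq1 by blast
    ultimately have "d ?g q = 0" unfolding I_def' by linarith
    then show ?thesis by simp
  qed
  have g1: "gate E F1 q = p"
  proof -
    let ?g = "gate E F1 q"
    have "?g \<in> F1" "?g \<in> I q p" using gate_props[OF F1] pq1 by auto
    moreover then have "d p q \<le> d ?g q" using mn pq1 by blast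
    moreover have "d ?g q = d q ?g" "d p q = d q p" using d_sym by auto
    ultimately have "d ?g p = 0" unfolding I_def' by linarith
    then show ?thesis by simp
  qed
  show ?thesis using pq1 g1 g2 by blast
qed

lemma sep_union_disj:
  assumes "sep x p \<inter> sep p q = {}"
  shows "sep x q = sep x p \<union> sep p q"
  using sep_symdiff[of x q p] assms by blast

lemma gate_case:
  assumes K1: "finite K1" "K1 \<subseteq> HP" and K2: "finite K2" "K2 \<subseteq> HP"
  shows "\<exists>K c. finite K \<and> K \<subseteq> HP \<and> gate E (Oc K1 c1) ` Oc K2 c2 = Oc K c"
proof -
  let ?F1 = "Oc K1 c1" and ?F2 = "Oc K2 c2"
  have F1: "convex_sub E ?F1" and F2: "convex_sub E ?F2" using Oc_convex by auto
  obtain p q where pq: "p \<in> ?F1" "q \<in> ?F2" "gate E ?F2 p = q" "gate E ?F1 q = p"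
    using closest_pair[OF F1 F2] by blast
  define S where "S = sep p q"
  have sF1: "\<forall>s\<in>S. \<forall>z\<in>?F1. sepp s q z"
    using gate_sep[OF F1, of _ q] pq(4) sep_sym[of p q] unfolding S_def by auto
  have sF2: "\<forall>s\<in>S. \<forall>z\<in>?F2. sepp s p z"
    using gate_sep[OF F2, of _ p] pq(3) unfolding S_def by auto
  have F1p: "Oc K1 p = ?F1" using Oc_base[OF pq(1)] .
  have F2q: "Oc K2 q = ?F2" using Oc_base[OF pq(2)] .
  have "gate E ?F1 ` ?F2 = Oc (K1 \<union> K2 \<union> S) p"
  proof
    show "gate E ?F1 ` ?F2 \<subseteq> Oc (K1 \<union> K2 \<union> S) p"
    proof
      fix x assume "x \<in> gate E ?F1 ` ?F2"
      then obtain y where y: "y \<in> ?F2" "x = gate E ?F1 y" by blast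
      have xF1: "x \<in> ?F1" using gate_props(1)[OF F1] y(2) by simp
      have sub: "sep x p \<subseteq> sep y q" using gate_nonexp[OF F1, of y q] y(2) pq(4) by simp
      show "x \<in> Oc (K1 \<union> K2 \<union> S) p" unfolding Oc_def
      proof (intro CollectI ballI)
        fix H k assume H: "H \<in> sep x p" and k: "k \<in> K1 \<union> K2 \<union> S"
        show "trans H k"
        proof -
          { assume "k \<in> K1" then have ?thesis using Oc_sep[OF xF1 pq(1) H] by blast }
          moreover
          { assume "k \<in> K2" then have ?thesis using Oc_sep[OF y(1) pq(2)] sub H by blast }
          moreover
          { assume kS: "k \<in> S"
            have a: "sepp H x p" "sepp H y q" using H sub unfolding sep_def by auto
            have b1: "sepp k q x" using sF1 kS xF1 by blast
            have b2: "sepp k p y" using sF2 kS y(1) by blast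
            have b3: "sepp k p q" using kS unfolding S_def sep_def by blast
            note b = b1 b2 b3
            have "sepp k x y" "\<not> sepp k x p" "\<not> sepp k y q" using b unfolding sepp_def by blast+
            then have "trans k H" using trans_intro2[OF a(1) a(2)] by blast
            then have ?thesis by (rule trans_sym) }
          ultimately show ?thesis using k by blast
        qed
      qed
    qed
    show "Oc (K1 \<union> K2 \<union> S) p \<subseteq> gate E ?F1 ` ?F2"
    proof
      fix x assume x: "x \<in> Oc (K1 \<union> K2 \<union> S) p"
      have xK: "x \<in> Oc K1 p" "x \<in> Oc K2 p" "x \<in> Oc S p" using x Oc_Un by auto
      have xF1: "x \<in> ?F1" using xK(1) F1p by simp
      have dj: "sep x p \<inter> S = {}" using Oc_notin[OF xK(3)] by blast
      have sxq: "sep x q = sep x p \<union> S" using sep_union_disj[of x p q] dj unfolding S_def by simp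
      have "\<exists>y. sep x y = S \<and> sep y q = sep x p"
        by (rule translate) (use sxq dj xK(3) in \<open>auto simp: Oc_def\<close>)
      then obtain y where y: "sep x y = S" "sep y q = sep x p" by blast
      have "y \<in> Oc K2 q" using xK(2) y(2) unfolding Oc_def by auto
      then have yF2: "y \<in> ?F2" using F2q by simp
      have "gate E ?F1 y = x"
      proof (rule gate_char[OF F1 xF1])
        show "\<forall>w\<in>?F1. x \<in> I y w"
        proof
          fix w assume w: "w \<in> ?F1"
          have "sep y x \<inter> sep x w = {}"
          proof (rule ccontr)
            assume "sep y x \<inter> sep x w \<noteq> {}"
            then obtain s where s: "s \<in> S" "s \<in> sep x w" using y(1) sep_sym[of y x] by blast
            have "sepp s q x" "sepp s q w" using sF1 s(1) xF1 w by auto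
            then have "\<not> sepp s x w" unfolding sepp_def by blast
            then show False using s(2) unfolding sep_def by auto
          qed
          then show "x \<in> I y w" unfolding I_sep .
        qed
      qed
      then show "x \<in> gate E ?F1 ` ?F2" using yF2 by force
    qed
  qed
  note e3 = this
  have e1: "finite (K1 \<union> K2 \<union> S)" using K1 K2 sep_finite unfolding S_def by auto
  have e2: "K1 \<union> K2 \<union> S \<subseteq> HP" using K1 K2 sep_HP unfolding S_def by auto
  show ?thesis
    by (rule exI[where x="K1 \<union> K2 \<union> S"], rule exI[where x=p], intro conjI, rule e1, rule e2, rule e3)
qed

lemma par_case:
  assumes K: "finite K" "K \<subseteq> HP" and G: "convex_sub E G" and par: "parallel E (Oc K c) G"
  shows "\<exists>K' c'. finite K' \<and> K' \<subseteq> HP \<and> G = Oc K' c'"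
proof -
  let ?F = "Oc K c"
  have F: "convex_sub E ?F" using Oc_convex .
  have cr: "crossH ?F = crossH G" using parallel_crossH[OF cs_gc[OF F] cs_gc[OF G] par] .
  define c' where "c' = gate E G c"
  define S where "S = sep c c'"
  have c'G: "c' \<in> G" using gate_props(1)[OF G] unfolding c'_def .
  have sG: "\<forall>s\<in>S. \<forall>z\<in>G. sepp s c z" using gate_sep[OF G] unfolding S_def c'_def by auto
  have sF: "\<forall>s\<in>S. \<forall>z\<in>?F. \<not> sepp s c z"
  proof (intro ballI notI)
    fix s z assume s: "s \<in> S" and z: "z \<in> ?F" and sz: "sepp s c z"
    have "s \<in> crossH ?F" using crossH_iff[OF cs_gc[OF F]] s sz z Oc_c sep_HP unfolding S_def by blast
    then have "s \<in> crossH G" using cr by simp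
    then obtain a b where "a \<in> G" "b \<in> G" "sepp s a b" using crossH_iff[OF cs_gc[OF G]] by blast
    then show False using sG s unfolding sepp_def by blast
  qed
  have "G = Oc (K \<union> S) c'"
  proof
    show "G \<subseteq> Oc (K \<union> S) c'"
    proof
      fix x assume xG: "x \<in> G"
      show "x \<in> Oc (K \<union> S) c'" unfolding Oc_def
      proof (intro CollectI ballI)
        fix H k assume H: "H \<in> sep x c'" and k: "k \<in> K \<union> S"
        have "H \<in> crossH G" using sep_crossH[OF cs_gc[OF G] xG c'G] H by blast
        then have "H \<in> crossH ?F" using cr by simp
        then obtain f1 f2 where f: "f1 \<in> ?F" "f2 \<in> ?F" "sepp H f1 f2" using crossH_iff[OF cs_gc[OF F]] by blast
        have Hf: "H \<in> sep f1 f2" using f(3) H sep_HP unfolding sep_def by auto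
        show "trans H k"
        proof (cases "k \<in> K")
          case True then show ?thesis using Oc_sep[OF f(1) f(2) Hf] by blast
        next
          case False
          then have kS: "k \<in> S" using k by simp
          have a: "sepp H x c'" using H unfolding sep_def by auto
          have b1: "\<not> sepp k c f1" "\<not> sepp k c f2" using sF kS f(1,2) by blast+
          have b2: "sepp k c x" "sepp k c c'" using sG kS xG c'G by blast+
          note b = b1 b2
          have "sepp k f1 x" "\<not> sepp k f1 f2" "\<not> sepp k x c'" using b unfolding sepp_def by blast+
          then have "trans k H" using trans_intro2[OF f(3) a] by blast
          then show ?thesis by (rule trans_sym)
        qed
      qed
    qed
    show "Oc (K \<union> S) c' \<subseteq> G"
    proof
      fix x assume x: "x \<in> Oc (K \<union> S) c'"
      have xK: "x \<in> Oc K c'" "x \<in> Oc S c'" using x Oc_Un by auto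
      have dj: "sep x c' \<inter> S = {}" using Oc_notin[OF xK(2)] by blast
      have sxc: "sep x c = sep x c' \<union> S" using sep_union_disj[of x c' c] dj sep_sym[of c c'] unfolding S_def by simp
      have "\<exists>y. sep x y = S \<and> sep y c = sep x c'"
        by (rule translate) (use sxc dj xK(2) in \<open>auto simp: Oc_def\<close>)
      then obtain y where y: "sep x y = S" "sep y c = sep x c'" by blast
      have yF: "y \<in> ?F" using xK(1) y(2) unfolding Oc_def by auto
      have "sep y (gate E G y) = S"
      proof (rule set_eqI)
        fix H
        show "H \<in> sep y (gate E G y) \<longleftrightarrow> H \<in> S"
        proof
          assume "H \<in> sep y (gate E G y)"
          then have H: "H \<in> HP" "\<forall>z\<in>G. sepp H y z" using gate_sep[OF G] by auto
          have "H \<notin> crossH G"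
          proof
            assume "H \<in> crossH G"
            then obtain a b where "a \<in> G" "b \<in> G" "sepp H a b" using crossH_iff[OF cs_gc[OF G]] by blast
            then show False using H unfolding sepp_def by blast
          qed
          then have "H \<notin> crossH ?F" using cr by simp
          then have "\<not> sepp H y c" using crossH_iff[OF cs_gc[OF F]] yF Oc_c H(1) by blast
          then have "\<forall>z\<in>G. sepp H c z" using H(2) unfolding sepp_def by blast
          then show "H \<in> S" using gate_sep[OF G] H(1) unfolding S_def c'_def by blast
        next
          assume H: "H \<in> S"
          have "H \<in> HP" using H sep_HP unfolding S_def by blast
          moreover have "\<not> sepp H c y" using sF H yF by blast
          moreover have "\<forall>z\<in>G. sepp H c z" using sG H by blast
          ultimately have "\<forall>z\<in>G. sepp H y z" unfolding sepp_def by blast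
          then show "H \<in> sep y (gate E G y)" using gate_sep[OF G] \<open>H \<in> HP\<close> by blast
        qed
      qed
      then have "sep x (gate E G y) = {}"
        using sep_symdiff[of x "gate E G y" y] y(1) sep_sym[of x y] by auto
      then have "x = gate E G y" using sep_empty_iff by blast
      then show "x \<in> G" using gate_props(1)[OF G] by simp
    qed
  qed
  note e3 = this
  have e1: "finite (K \<union> S)" using K sep_finite unfolding S_def by auto
  have e2: "K \<union> S \<subseteq> HP" using K sep_HP unfolding S_def by auto
  show ?thesis
    by (rule exI[where x="K \<union> S"], rule exI[where x=c'], intro conjI, rule e1, rule e2, rule e3)
qed

lemma hc_Oc:
  assumes "F \<in> hyperclosure E"
  shows "\<exists>K c. finite K \<and> K \<subseteq> HP \<and> F = Oc K c"
  using assms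
proof (induction rule: hyperclosure.induct)
  case whole
  then show ?case using Oc_empty by blast
next
  case (combhyp Y)
  then obtain u v where uv: "E u v" "Y = comb_hyperplane E u v" unfolding comb_hyperplanes_def by auto
  then have "Y = Oc {hyperplane_of E u v} u" using comb_Oc by simp
  then show ?case using hyp_in_HP[OF uv(1)] by blast
next
  case (gate_img F F')
  then obtain K1 c1 K2 c2 where k: "finite K1" "K1 \<subseteq> HP" "F = Oc K1 c1" "finite K2" "K2 \<subseteq> HP" "F' = Oc K2 c2"
    by blast
  have "\<exists>K c. finite K \<and> K \<subseteq> HP \<and> gate E (Oc K1 c1) ` Oc K2 c2 = Oc K c"
    using gate_case[OF k(1) k(2) k(4) k(5)] by blast
  then show ?case using k(3) k(6) by simp
next
  case (par F G)
  then obtain K c where k: "finite K" "K \<subseteq> HP" "F = Oc K c" by blast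
  have "parallel E (Oc K c) G" using par.hyps(3) k(3) by simp
  then show ?case using par_case[OF k(1) k(2) par.hyps(2)] by blast
qed


lemma ball_finite:
  assumes lf: "locally_finite E"
  shows "finite {z. d c z \<le> n}"
proof (induction n)
  case 0
  then show ?case by simp
next
  case (Suc n)
  have "{z. d c z \<le> Suc n} \<subseteq> {z. d c z \<le> n} \<union> (\<Union>w\<in>{z. d c z \<le> n}. {y. E w y})"
  proof
    fix z assume z: "z \<in> {z. d c z \<le> Suc n}"
    show "z \<in> {z. d c z \<le> n} \<union> (\<Union>w\<in>{z. d c z \<le> n}. {y. E w y})"
    proof (cases "d c z \<le> n")
      case True then show ?thesis by simp
    next
      case False
      then have "d z c = Suc n" using z d_sym by simp
      then obtain w where "E z w" "d w c = n" using d_step by blast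
      then have "E w z" "d c w \<le> n" using E_sym d_sym by auto
      then show ?thesis by blast
    qed
  qed
  moreover have "finite ({z. d c z \<le> n} \<union> (\<Union>w\<in>{z. d c z \<le> n}. {y. E w y}))"
    using Suc.IH lf unfolding locally_finite_def by blast
  ultimately show ?case by (rule finite_subset)
qed

lemma single_k_aux:
  assumes e: "E u v" and cW: "c \<in> W u v"
  shows "\<exists>z. Oc {hyperplane_of E u v} c = Oc (sep c z) c"
proof -
  let ?F0 = "comb_hyperplane E u v"
  let ?k = "hyperplane_of E u v"
  let ?p = "gate E ?F0 c"
  have F0c: "convex_sub E ?F0" using comb_convex[OF e] .
  have pF0: "?p \<in> ?F0" using gate_props(1)[OF F0c] .
  then obtain p' where pp: "(?p, p') \<in> ?k" and pW: "?p \<in> W u v" using comb_iff by blast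
  have ep: "E ?p p'" using pp hyp_char[OF e] by auto
  have hk: "hyperplane_of E ?p p' = ?k" using hyp_eq[OF e pp] .
  have "\<not> sepp ?k c ?p" using sepp_hyp[OF e] cW pW by simp
  then have "?k \<notin> sep c ?p" unfolding sep_def by auto
  then have sp: "sep c p' = insert ?k (sep c ?p)" using sep_insert_edge[OF ep] hk by simp
  have kHP: "?k \<in> HP" using hyp_in_HP[OF e] .
  have sub: "Oc {?k} c \<subseteq> Oc (sep c ?p) c"
  proof
    fix x assume x: "x \<in> Oc {?k} c"
    show "x \<in> Oc (sep c ?p) c" unfolding Oc_def
    proof (intro CollectI ballI)
      fix H s assume H: "H \<in> sep x c" and s: "s \<in> sep c ?p"
      have sHP: "s \<in> HP" "H \<in> HP" using s H sep_HP by auto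
      have f1: "\<forall>z\<in>?F0. sepp s c z" using s gate_sep[OF F0c] by blast
      have f2: "\<not> trans s ?k"
      proof
        assume "trans s ?k"
        then obtain z1 z2 where "z1 \<in> ?F0" "z2 \<in> ?F0" "sepp s z1 z2" using trans_comb[OF e sHP(1)] by blast
        then show False using f1 unfolding sepp_def by blast
      qed
      have "trans H ?k" using x H unfolding Oc_def by blast
      then obtain z1 z2 where z: "z1 \<in> ?F0" "z2 \<in> ?F0" "sepp H z1 z2" using trans_comb[OF e sHP(2)] by blast
      have "s \<notin> sep x c" using x f2 unfolding Oc_def by blast
      then have nsx: "\<not> sepp s x c" using sHP unfolding sep_def by auto
      have "sepp s x z1" "\<not> sepp s z1 z2" using nsx f1 z unfolding sepp_def by blast+
      moreover have "sepp H x c" using H unfolding sep_def by auto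
      ultimately show "trans H s" using trans_intro[of H x c z1 z2 s] z(3) nsx by blast
    qed
  qed
  have "Oc (sep c p') c = Oc {?k} c"
    using Oc_insert[of ?k "sep c ?p" c] sp sub by auto
  then show ?thesis by metis
qed

lemma single_k:
  assumes k: "k \<in> HP"
  shows "\<exists>z. Oc {k} c = Oc (sep c z) c"
proof -
  obtain u v where uv: "E u v" "k = hyperplane_of E u v" using k HP_iff by auto
  show ?thesis
  proof (cases "c \<in> W u v")
    case True
    then show ?thesis using single_k_aux uv by blast
  next
    case False
    then have "c \<in> W v u" using W_compl[OF uv(1)] by simp
    moreover have "k = hyperplane_of E v u" using hyp_swap[OF uv(1)] uv(2) by simp
    ultimately show ?thesis using single_k_aux E_sym[OF uv(1)] by metis
  qed
qed

lemma L3: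
  assumes lf: "locally_finite E" and K: "finite K" "K \<subseteq> HP"
  shows "\<exists>C. finite C \<and> convex_sub E C \<and> c \<in> C \<and> Oc K c = Oc (crossH C) c"
proof -
  have "\<forall>k\<in>K. \<exists>z. Oc {k} c = Oc (sep c z) c" using single_k K(2) by blast
  then obtain zf where zf: "\<forall>k\<in>K. Oc {k} c = Oc (sep c (zf k)) c" by metis
  define U where "U = (\<Union>k\<in>K. sep c (zf k))"
  have Ufin: "finite U" unfolding U_def using K(1) sep_finite by blast
  have OK: "Oc K c = Oc U c"
  proof -
    have 1: "Oc K c = {x. \<forall>k\<in>K. x \<in> Oc {k} c}" unfolding Oc_def by blast
    have 2: "Oc U c = {x. \<forall>k\<in>K. x \<in> Oc (sep c (zf k)) c}" unfolding Oc_def U_def by blast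
    show ?thesis unfolding 1 2 using zf by auto
  qed
  define C where "C = convex_hull_sub E (insert c (zf ` K))"
  define R where "R = {z. sep z c \<subseteq> U}"
  have Rgc: "geod_closed E R"
    unfolding gc_def' R_def using sep_I_sub by blast
  have cR: "insert c (zf ` K) \<subseteq> R" unfolding R_def U_def using sep_sym by auto
  have CR: "C \<subseteq> R" unfolding C_def by (rule hull_sub[OF Rgc cR])
  have Cgc: "geod_closed E C" unfolding C_def by (rule hull_gc)
  have sup: "insert c (zf ` K) \<subseteq> C" unfolding C_def by (rule hull_sup)
  have cC: "c \<in> C" using sup by blast
  have zC: "\<And>k. k \<in> K \<Longrightarrow> zf k \<in> C" using sup by blast
  have Cc: "convex_sub E C" unfolding convex_sub_def using Cgc cC by blast
  have cross: "crossH C = U"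
  proof
    show "crossH C \<subseteq> U"
    proof
      fix H assume "H \<in> crossH C"
      then obtain a b where ab: "a \<in> C" "b \<in> C" "sepp H a b" "H \<in> HP" using crossH_iff[OF Cgc] by blast
      then have "H \<in> sep a c \<union> sep c b" using sep_tri[of a b c] unfolding sep_def by blast
      then show "H \<in> U" using CR ab sep_sym[of c b] unfolding R_def by blast
    qed
    show "U \<subseteq> crossH C"
      unfolding U_def using sep_crossH[OF Cgc cC zC] by blast
  qed
  have "C \<subseteq> {z. d c z \<le> card U}"
  proof
    fix z assume "z \<in> C"
    then have "sep z c \<subseteq> U" using CR unfolding R_def by blast
    then have "card (sep z c) \<le> card U" using Ufin by (rule card_mono[rotated])
    then show "z \<in> {z. d c z \<le> card U}" using d_card[of z c] d_sym[of z c] by simp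
  qed
  then have "finite C" using ball_finite[OF lf] finite_subset by blast
  then show ?thesis using Cc cC OK cross by blast
qed

lemma crossH_finite:
  assumes C: "finite C"
  shows "finite (crossH C)"
proof -
  have "crossH C \<subseteq> (\<lambda>f. hyperplane_of E (fst f) (snd f)) ` (C \<times> C)"
  proof
    fix H assume H: "H \<in> crossH C"
    then obtain f where f: "f \<in> H" "fst f \<in> C" "snd f \<in> C" unfolding crossH_def crosses_def by blast
    obtain u v where uv: "E u v" "H = hyperplane_of E u v" using H HP_iff unfolding crossH_def by auto
    have "hyperplane_of E (fst f) (snd f) = H" using hyp_eq[OF uv(1), of "fst f" "snd f"] f(1) uv(2) by simp
    moreover have "f \<in> C \<times> C" using f by (cases f) auto
    ultimately show "H \<in> (\<lambda>f. hyperplane_of E (fst f) (snd f)) ` (C \<times> C)"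
      by (intro image_eqI[where x=f]) auto
  qed
  then show ?thesis using C by (meson finite_SigmaI finite_imageI finite_subset)
qed

lemma crossH_HP: "crossH C \<subseteq> HP" unfolding crossH_def by auto

end

theorem mainTheorem10:
  fixes E :: "'a \<Rightarrow> 'a \<Rightarrow> bool" and F :: "'a set"
  assumes "cat0_cube_complex E" and "locally_finite E" and "convex_sub E F"
  shows "F \<in> hyperclosure E \<longleftrightarrow>
         (\<exists>C c. finite C \<and> convex_sub E C \<and> c \<in> C \<and> F = orth_compl E C c)"
proof -
  interpret mg E using assms(1) unfolding cat0_cube_complex_def by unfold_locales
  show ?thesis
  proof
    assume "F \<in> hyperclosure E"
    then obtain K c where K: "finite K" "K \<subseteq> HP" "F = Oc K c" using hc_Oc by blast
    then obtain C where C: "finite C" "convex_sub E C" "c \<in> C" "Oc K c = Oc (crossH C) c"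
      using L3[OF assms(2) K(1) K(2)] by blast
    then have "F = orth_compl E C c" using orth_Oc[OF C(2) C(3)] K(3) by simp
    then show "\<exists>C c. finite C \<and> convex_sub E C \<and> c \<in> C \<and> F = orth_compl E C c" using C by blast
  next
    assume "\<exists>C c. finite C \<and> convex_sub E C \<and> c \<in> C \<and> F = orth_compl E C c"
    then obtain C c where C: "finite C" "convex_sub E C" "c \<in> C" "F = orth_compl E C c" by blast
    then have "F = Oc (crossH C) c" using orth_Oc by simp
    then show "F \<in> hyperclosure E" using Oc_finite_hc[OF crossH_finite[OF C(1)] crossH_HP] by simp
  qed
qed

end
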